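(* Define integers $C_{1^{4}2^{2}4^{-2}}(n)$ and $C_{1^{4}2^{4}4^{-3}}(n)$ by \[ \frac{(q;q)_\infty^{4}\,(q^2;q^2)_\infty^{2}}{(q^4;q^4)_\infty^{2}}=\sum_{n\geq 0} C_{1^{4}2^{2}4^{-2}}(n)\,q^n,\qquad \frac{(q;q)_\infty^{4}\,(q^2;q^2)_\infty^{4}}{(q^4;q^4)_\infty^{3}}=\sum_{n\geq 0} C_{1^{4}2^{4}4^{-3}}(n)\,q^n . \] Then: (1) The sequence $\{\operatorname{sgn}(C_{1^{4}2^{2}4^{-2}}(n))\}_{n\ge1}$ has period $8$; in particular, for every $n\ge1$, \[ \operatorname{sgn}\left(C_{1^{4}2^{2}4^{-2}}(n)\right)=\begin{cases}1&\text{if } n\equiv 0,3,7\pmod 8,\\ -1&\text{if } n\equiv 1,4,5\pmod 8,\\ 0&\text{if } n\equiv 2\pmod 4.\end{cases} \] (2) The sequence $\{\operatorname{sgn}(C_{1^{4}2^{4}4^{-3}}(n))\}_{n\ge1}$ has period $8$; in particular, for every $n\ge1$, \[ \operatorname{sgn}\left(C_{1^{4}2^{4}4^{-3}}(n)\right)=\begin{cases}1&\text{if } n\equiv 0,3,6,7\pmod 8,\\ -1&\text{if } n\equiv 1,2,4,5\pmod 8.\end{cases} \]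
   Context: $(a;q)_\infty:=\prod_{j\geq 0}(1-aq^j)$ denotes the $q$-Pochhammer symbol; the identities are identities of formal power series in $q$. *)

theory Defs
  imports "HOL-Computational_Algebra.Formal_Power_Series"
begin

definition qpoch_inf :: "'a::field fps \<Rightarrow> 'a fps \<Rightarrow> 'a fps" where
  "qpoch_inf a q = lim (\<lambda>N. \<Prod>j<N. (1 - a * q ^ j))"

definition C1 :: "nat \<Rightarrow> rat" where
  "C1 n = fps_nth
     ((qpoch_inf fps_X fps_X) ^ 4 * (qpoch_inf (fps_X^2) (fps_X^2)) ^ 2
        / (qpoch_inf (fps_X^4) (fps_X^4)) ^ 2) n"

definition C2 :: "nat \<Rightarrow> rat" where
  "C2 n = fps_nth
     ((qpoch_inf fps_X fps_X) ^ 4 * (qpoch_inf (fps_X^2) (fps_X^2)) ^ 4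
        / (qpoch_inf (fps_X^4) (fps_X^4)) ^ 3) n"

end

theory Submission
  imports Defs "HOL-Computational_Algebra.Primes"
begin


definition sq4 :: "int \<Rightarrow> bool" where
  "sq4 n \<longleftrightarrow> (\<exists>a b c d. n = a^2 + b^2 + c^2 + d^2)"

lemma euler4:
  fixes a b c d w x y z :: int
  shows "(a^2+b^2+c^2+d^2)*(w^2+x^2+y^2+z^2) =
    (a*w+b*x+c*y+d*z)^2 + (a*x-b*w+c*z-d*y)^2 + (a*y-b*z-c*w+d*x)^2 + (a*z+b*y-c*x-d*w)^2"
  by algebra

lemma sq4_mult: "sq4 m \<Longrightarrow> sq4 n \<Longrightarrow> sq4 (m*n)"
  unfolding sq4_def using euler4 by metis

lemma sq4_0: "sq4 0" unfolding sq4_def by (rule exI[of _ 0])+ simp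
lemma sq4_1: "sq4 1" unfolding sq4_def by (rule exI[of _ 1], (rule exI[of _ 0])+) simp
lemma sq4_2: "sq4 2" unfolding sq4_def by (rule exI[of _ 1], rule exI[of _ 1], (rule exI[of _ 0])+) simp

lemma dvd_small_zero:
  fixes p t :: int assumes "p dvd t" "\<bar>t\<bar> < p" shows "t = 0"
  proof (rule ccontr)
  assume "t \<noteq> 0"
  hence "\<bar>p\<bar> \<le> \<bar>t\<bar>" using dvd_imp_le_int assms(1) by blast
  thus False using assms(2) by linarith
qed

lemma sq_mod_inj:
  fixes p :: int assumes p: "prime p" and h: "2*h < p" and that: "s = 1 \<or> s = -1"
  shows "inj_on (\<lambda>x. (c + s * x^2) mod p) {0..h}"
proof (rule inj_onI)
  fix x y assume x: "x \<in> {0..h}" and y: "y \<in> {0..h}" and e: "(c + s * x^2) mod p = (c + s * y^2) mod p"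
  have "p dvd (c + s*x^2) - (c + s*y^2)" using e by (simp add: mod_eq_dvd_iff)
  hence "p dvd s * ((x - y) * (x + y))" by (simp add: algebra_simps power2_eq_square)
  hence "p dvd (x - y) * (x + y)" using that by auto
  hence "p dvd (x - y) \<or> p dvd (x + y)" using p prime_dvd_mult_iff by blast
  thus "x = y"
  proof
    assume "p dvd x - y" with x y h have "x - y = 0" by (intro dvd_small_zero) auto
    thus ?thesis by simp
  next
    assume "p dvd x + y" with x y h have "x + y = 0" by (intro dvd_small_zero) auto
    thus ?thesis using x y by simp
  qed
qed

lemma exists_xy:
  fixes p :: int assumes p: "prime p" and odd: "odd p"
  shows "\<exists>x y. 0 \<le> x \<and> 2*x < p \<and> 0 \<le> y \<and> 2*y < p \<and> p dvd x^2+y^2+1"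
proof -
  define h where "h = (p - 1) div 2"
  have p2: "p \<ge> 2" using p prime_ge_2_int by blast
  have hp: "2*h + 1 = p" using odd unfolding h_def by (auto elim!: oddE)
  have h0: "h \<ge> 0" using hp p2 by linarith
  define A where "A = (\<lambda>x. (0 + 1 * x^2) mod p) ` {0..h}"
  define B where "B = (\<lambda>x. (-1 + (-1) * x^2) mod p) ` {0..h}"
  have cA: "card A = nat (h + 1)" unfolding A_def
    by (subst card_image) (use sq_mod_inj[OF p, where h=h and s=1 and c=0] hp in auto)
  have cB: "card B = nat (h + 1)" unfolding B_def
    by (subst card_image) (use sq_mod_inj[OF p, where h=h and s="-1" and c="-1"] hp in auto)
  have sub: "A \<union> B \<subseteq> {0..<p}" 
  proof -
    have "\<And>z. z mod p \<in> {0..<p}" using p2 by simp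
    thus ?thesis unfolding A_def B_def by blast
  qed
  have "A \<inter> B \<noteq> {}"
  proof
    assume "A \<inter> B = {}"
    hence "card (A \<union> B) = card A + card B" unfolding A_def B_def by (intro card_Un_disjoint) auto
    moreover have "card (A \<union> B) \<le> card {0..<p}" by (rule card_mono[OF _ sub]) auto
    ultimately show False using cA cB hp h0 by simp
  qed
  then obtain x y where x: "x \<in> {0..h}" and y: "y \<in> {0..h}" and e0: "(0 + 1 * x^2) mod p = (-1 + (-1) * y^2) mod p"
    unfolding A_def B_def by blast
  have e: "x^2 mod p = (-1 - y^2) mod p" using e0 by simp
  have "p dvd x^2 - (-1 - y^2)" using e by (simp add: mod_eq_dvd_iff)
  hence "p dvd x^2+y^2+1" by (simp add: algebra_simps)
  thus ?thesis using x y hp by (intro exI[of _ x] exI[of _ y]) auto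
qed

lemma red_props:
  fixes m x :: int assumes m: "m > 0"
  defines "y \<equiv> (x + m div 2) mod m - m div 2"
  shows "m dvd x - y" "4 * y^2 \<le> m^2"
proof -
  have "x - y = m * ((x + m div 2) div m)" unfolding y_def
    by (metis add_diff_cancel_right' diff_diff_eq2 minus_mod_eq_mult_div)
  thus "m dvd x - y" by simp
  have a: "(x + m div 2) mod m \<ge> 0" "(x + m div 2) mod m < m" using m by simp_all
  have "2 * (m div 2) \<le> m" "2 * (m div 2) \<ge> m - 1" by linarith+
  have gen: "\<And>a h::int. 0 \<le> a \<Longrightarrow> a < m \<Longrightarrow> 2*h \<le> m \<Longrightarrow> m - 1 \<le> 2*h \<Longrightarrow> -m \<le> 2*(a - h) \<and> 2*(a-h) \<le> m"
    by presburger
  have "-m \<le> 2*y \<and> 2*y \<le> m" unfolding y_def by (rule gen) (use a \<open>2 * (m div 2) \<le> m\<close> \<open>2 * (m div 2) \<ge> m - 1\<close> in auto)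
  hence "-m \<le> 2*y" "2*y \<le> m" by auto
  hence "\<bar>2*y\<bar> \<le> m" using \<open>-m \<le> 2*y\<close> by (simp add: abs_le_iff)
  hence "\<bar>2*y\<bar>^2 \<le> m^2" by (intro power_mono) auto
  thus "4 * y^2 \<le> m^2" by (simp add: power_mult_distrib)
qed

lemma half_case:
  fixes m x y :: int assumes "4*y^2 = m^2" "m dvd x - y"
  shows "m^2 dvd x^2 - y^2"
proof -
  obtain t where t: "x = y + m*t" using assms(2) by (metis add.commute diff_add_cancel dvdE)
  have "(2*y)^2 = m^2" using assms(1) by (simp add: power_mult_distrib)
  hence "2*y = m \<or> 2*y = -m" using power2_eq_iff by blast
  hence "x^2 - y^2 = m^2 * (t + t^2) \<or> x^2 - y^2 = m^2 * (t^2 - t)"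
    unfolding t by (auto simp: algebra_simps power2_eq_square)
  thus ?thesis by auto
qed

lemma descent:
  fixes m p x1 x2 x3 x4 :: int
  assumes p: "prime p" and m1: "1 < m" and mp: "m < p"
    and e: "m * p = x1^2 + x2^2 + x3^2 + x4^2"
  shows "\<exists>r. 0 < r \<and> r < m \<and> sq4 (r * p)"
proof -
  have m0: "m > 0" using m1 by simp
  have notdvd: "\<not> m dvd p"
  proof
    assume "m dvd p"
    hence "m = 1 \<or> m = p" using p m0 unfolding prime_int_iff by auto
    thus False using m1 mp by auto
  qed
  define red where "red x = (x + m div 2) mod m - m div 2" for x
  define y1 where "y1 = red x1"
  define y2 where "y2 = red x2"
  define y3 where "y3 = red x3"
  define y4 where "y4 = red x4"
  have d1: "m dvd x1 - y1" and q1: "4*y1^2 \<le> m^2" using red_props[OF m0, of x1] unfolding y1_def red_def by auto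
  have d2: "m dvd x2 - y2" and q2: "4*y2^2 \<le> m^2" using red_props[OF m0, of x2] unfolding y2_def red_def by auto
  have d3: "m dvd x3 - y3" and q3: "4*y3^2 \<le> m^2" using red_props[OF m0, of x3] unfolding y3_def red_def by auto
  have d4: "m dvd x4 - y4" and q4: "4*y4^2 \<le> m^2" using red_props[OF m0, of x4] unfolding y4_def red_def by auto
  obtain t1 where t1': "x1 - y1 = m*t1" using d1 unfolding dvd_def by blast
  have t1: "y1 = x1 - m*t1" using t1' by simp
  obtain t2 where t2': "x2 - y2 = m*t2" using d2 unfolding dvd_def by blast
  have t2: "y2 = x2 - m*t2" using t2' by simp
  obtain t3 where t3': "x3 - y3 = m*t3" using d3 unfolding dvd_def by blast
  have t3: "y3 = x3 - m*t3" using t3' by simp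
  obtain t4 where t4': "x4 - y4 = m*t4" using d4 unfolding dvd_def by blast
  have t4: "y4 = x4 - m*t4" using t4' by simp
  define Y where "Y = y1^2 + y2^2 + y3^2 + y4^2"
  have "Y = m * p - m * (2*(x1*t1+x2*t2+x3*t3+x4*t4) - m*(t1^2+t2^2+t3^2+t4^2))"
    unfolding Y_def e t1 t2 t3 t4 by (simp add: algebra_simps power2_eq_square)
  hence "m dvd Y" by simp
  then obtain r where r: "Y = m * r" by blast
  have Y0: "Y \<ge> 0" unfolding Y_def by simp
  have r0: "r \<ge> 0" using Y0 m0 r by (simp add: zero_le_mult_iff)
  have "4 * Y \<le> 4 * m^2" unfolding Y_def distrib_left using q1 q2 q3 q4 by linarith
  hence "m * r \<le> m * m" using r by (simp add: power2_eq_square)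
  hence rm: "r \<le> m" using m0 by simp
  show ?thesis
  proof (cases "r = 0")
    case True
    hence "y1^2 + y2^2 + y3^2 + y4^2 = 0" using r Y_def by simp
    hence "y1 = 0 \<and> y2 = 0 \<and> y3 = 0 \<and> y4 = 0" by (simp add: sum_power2_eq_zero_iff add_nonneg_eq_0_iff)
    hence "m * p = m * (m * (t1^2+t2^2+t3^2+t4^2))" using e t1 t2 t3 t4
      by (simp add: algebra_simps power2_eq_square)
    hence "p = m * (t1^2+t2^2+t3^2+t4^2)" using m0 by simp
    hence "m dvd p" by simp
    with notdvd show ?thesis by blast
  next
    case False
    show ?thesis
    proof (cases "r = m")
      case True
      hence "4*y1^2 + 4*y2^2 + 4*y3^2 + 4*y4^2 = 4 * m^2" using r Y_def by (simp add: power2_eq_square)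
      hence "4*y1^2 = m^2" "4*y2^2 = m^2" "4*y3^2 = m^2" "4*y4^2 = m^2" using q1 q2 q3 q4 by linarith+
      hence "m^2 dvd x1^2 - y1^2" "m^2 dvd x2^2 - y2^2" "m^2 dvd x3^2 - y3^2" "m^2 dvd x4^2 - y4^2"
        using half_case d1 d2 d3 d4 by blast+
      hence "m^2 dvd (x1^2 - y1^2) + (x2^2 - y2^2) + (x3^2 - y3^2) + (x4^2 - y4^2) + Y"
        using True r by (simp add: power2_eq_square)
      hence "m^2 dvd m * p" unfolding e Y_def by (simp add: algebra_simps)
      hence "m * m dvd m * p" by (simp add: power2_eq_square)
      hence "m dvd p" using m0 by simp
      with notdvd show ?thesis by blast
    next
      case False
      have rr: "0 < r" "r < m" using \<open>r \<noteq> 0\<close> False r0 rm by auto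
      define z1 where "z1 = x1*y1+x2*y2+x3*y3+x4*y4"
      define z2 where "z2 = x1*y2-x2*y1+x3*y4-x4*y3"
      define z3 where "z3 = x1*y3-x2*y4-x3*y1+x4*y2"
      define z4 where "z4 = x1*y4+x2*y3-x3*y2-x4*y1"
      have "z1 = m * (p - (x1*t1+x2*t2+x3*t3+x4*t4))"
        unfolding z1_def t1 t2 t3 t4 using e by (simp add: algebra_simps power2_eq_square)
      then obtain w1 where w1: "z1 = m * w1" by blast
      have "z2 = m * (x2*t1 - x1*t2 + x4*t3 - x3*t4)"
        unfolding z2_def t1 t2 t3 t4 by (simp add: algebra_simps)
      then obtain w2 where w2: "z2 = m * w2" by blast
      have "z3 = m * (x3*t1 - x1*t3 + x2*t4 - x4*t2)"
        unfolding z3_def t1 t2 t3 t4 by (simp add: algebra_simps)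
      then obtain w3 where w3: "z3 = m * w3" by blast
      have "z4 = m * (x4*t1 - x1*t4 + x3*t2 - x2*t3)"
        unfolding z4_def t1 t2 t3 t4 by (simp add: algebra_simps)
      then obtain w4 where w4: "z4 = m * w4" by blast
      have "(m*p) * Y = z1^2 + z2^2 + z3^2 + z4^2"
        unfolding e Y_def z1_def z2_def z3_def z4_def by (rule euler4)
      hence "(m*m) * (r*p) = (m*m) * (w1^2 + w2^2 + w3^2 + w4^2)"
        unfolding w1 w2 w3 w4 r by (simp add: algebra_simps power2_eq_square)
      hence "r*p = w1^2 + w2^2 + w3^2 + w4^2" using m0 by simp
      hence "sq4 (r*p)" unfolding sq4_def by blast
      thus ?thesis using rr by blast
    qed
  qed
qed

lemma prime_sq4:
  fixes p :: int assumes p: "prime p" shows "sq4 p"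
proof (cases "p = 2")
  case True thus ?thesis using sq4_2 by simp
next
  case False
  have p2: "p \<ge> 2" using p prime_ge_2_int by blast
  have odd: "odd p" using prime_odd_int[OF p] p2 False by simp
  obtain x y where xy: "0 \<le> x" "2*x < p" "0 \<le> y" "2*y < p" "p dvd x^2+y^2+1"
    using exists_xy[OF p odd] by blast
  obtain m1 where m1: "x^2+y^2+1 = p * m1" using xy(5) by blast
  have "(2*x)^2 \<le> (p - 1)^2" by (intro power_mono) (use xy in auto)
  moreover have "(2*y)^2 \<le> (p - 1)^2" by (intro power_mono) (use xy in auto)
  moreover have pp: "2*p \<le> p*p" using p2 by (simp add: mult_right_mono)
  ultimately have "4*(x^2+y^2+1) < 4*p^2" using p2 by (simp add: power2_eq_square algebra_simps, linarith)
  hence "p * m1 < p * p" using m1 by (simp add: power2_eq_square)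
  hence m1p: "m1 < p" using p2 by simp
  have "p * m1 > 0" using m1[symmetric] by (simp add: add_pos_nonneg)
  hence m1pos: "m1 > 0" using p2 by (simp add: zero_less_mult_iff)
  have sq1: "sq4 (int (nat m1) * p)" unfolding sq4_def using m1 m1pos
    by (intro exI[of _ x] exI[of _ y] exI[of _ 1] exI[of _ 0]) (simp add: mult.commute)
  define P where "P m \<longleftrightarrow> 0 < m \<and> sq4 (int m * p)" for m :: nat
  have Pm1: "P (nat m1)" unfolding P_def using sq1 m1pos by simp
  define m0 where "m0 = (LEAST m. P m)"
  have Pm0: "P m0" unfolding m0_def by (rule LeastI[of P, OF Pm1])
  have m0le: "m0 \<le> nat m1" unfolding m0_def by (rule Least_le[of P, OF Pm1])
  have "m0 = 1"
  proof (rule ccontr)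
    assume "m0 \<noteq> 1"
    hence gt: "1 < int m0" using Pm0 unfolding P_def by simp
    have lt: "int m0 < p" using m0le m1p m1pos by linarith
    obtain a b c d where "int m0 * p = a^2+b^2+c^2+d^2" using Pm0 unfolding P_def sq4_def by blast
    from descent[OF p gt lt this] obtain r where r: "0 < r" "r < int m0" "sq4 (r * p)" by blast
    have "P (nat r)" unfolding P_def using r by simp
    hence "m0 \<le> nat r" unfolding m0_def by (rule Least_le)
    thus False using r by simp
  qed
  thus ?thesis using Pm0 unfolding P_def by simp
qed

lemma all_sq4: "sq4 (int n)"
proof (induction n rule: prime_divisors_induct)
  case zero thus ?case using sq4_0 by simp
next
  case (unit x) thus ?case using sq4_1 by simp
next
  case (factor p x)
  have "sq4 (int p)" using factor(1) prime_sq4 prime_nat_int_transfer by blast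
  thus ?case using sq4_mult factor(2) by simp
qed




fun qb :: "'a::comm_ring_1 \<Rightarrow> nat \<Rightarrow> nat \<Rightarrow> 'a" where
  "qb x 0 j = (if j = 0 then 1 else 0)"
| "qb x (Suc m) j = (if j = 0 then 1 else qb x m (j - 1) + x^j * qb x m j)"

lemma qb_zero: "m < j \<Longrightarrow> qb x m j = 0"
  by (induction m arbitrary: j) auto

lemma qb_0[simp]: "qb x m 0 = 1" by (cases m) auto

definition qq :: "'a::comm_ring_1 \<Rightarrow> nat \<Rightarrow> 'a" where
  "qq x n = (\<Prod>i<n. (1 - x^(Suc i)))"

lemma qq_0[simp]: "qq x 0 = 1" by (simp add: qq_def)
lemma qq_Suc: "qq x (Suc n) = qq x n * (1 - x^(Suc n))" by (simp add: qq_def)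

lemma qb_prod: "j \<le> m \<Longrightarrow> qb x m j * qq x j * qq x (m - j) = qq x m"
proof (induction m arbitrary: j)
  case 0 thus ?case by simp
next
  case (Suc m)
  show ?case
  proof (cases "j = 0")
    case True thus ?thesis by simp
  next
    case False
    then obtain j' where j': "j = Suc j'" by (cases j) auto
    have IH1: "qb x m j' * qq x j' * qq x (m - j') = qq x m" using Suc j' by simp
    have t1: "qb x m j' * qq x j * qq x (Suc m - j) = qq x m * (1 - x^j)"
      using IH1 unfolding j' by (simp add: qq_Suc algebra_simps)
    show ?thesis
    proof (cases "j = Suc m")
      case True
      have "qb x (Suc m) j = qb x m j'" using j' True qb_zero[of m j x] by simp
      thus ?thesis using t1 True by (simp add: qq_Suc)
    next
      case False
      hence jm: "j \<le> m" using Suc.prems by simp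
      have IH2: "qb x m j * qq x j * qq x (m - j) = qq x m" using Suc.IH[OF jm] .
      have sm: "Suc m - j = Suc (m - j)" using jm by simp
      have t2: "x^j * qb x m j * qq x j * qq x (Suc m - j) = qq x m * (x^j - x^j * x^(Suc (m - j)))"
        unfolding sm qq_Suc using IH2 by (simp add: algebra_simps)
      have "j + Suc (m - j) = Suc m" using jm by simp
      hence pw: "x^j * x^(Suc (m - j)) = x^(Suc m)" by (metis power_add)
      have "qb x (Suc m) j * qq x j * qq x (Suc m - j) =
            qb x m j' * qq x j * qq x (Suc m - j) + x^j * qb x m j * qq x j * qq x (Suc m - j)"
        using j' by (simp add: algebra_simps)
      also have "\<dots> = qq x m * (1 - x^(Suc m))" unfolding t1 t2 pw by (simp add: algebra_simps)
      finally show ?thesis by (simp add: qq_Suc)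
    qed
  qed
qed

lemma qbin_thm:
  fixes x a b :: "'a::comm_ring_1"
  shows "(\<Prod>i<m. (a - b * x^i)) = (\<Sum>j\<le>m. qb x m j * a^(m-j) * (-b)^j * x^(j*(j-1) div 2))"
proof (induction m arbitrary: b)
  case 0 thus ?case by simp
next
  case (Suc m)
  define f where "f j = qb x m j * a^(m-j) * (-(b*x))^j * x^(j*(j-1) div 2)" for j
  have IH: "(\<Prod>i<m. (a - (b*x) * x^i)) = (\<Sum>j\<le>m. f j)" unfolding f_def by (rule Suc.IH)
  have "(\<Prod>i<Suc m. (a - b * x^i)) = (a - b) * (\<Prod>i<m. (a - (b*x) * x^i))"
    by (subst prod.lessThan_Suc_shift) (simp add: mult.assoc)
  also have "\<dots> = a * (\<Sum>j\<le>m. f j) + - (b * (\<Sum>j\<le>m. f j))" unfolding IH by (simp add: algebra_simps)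
  also have "a * (\<Sum>j\<le>m. f j) = (\<Sum>j\<le>Suc m. x^j * qb x m j * a^(Suc m - j) * (-b)^j * x^(j*(j-1) div 2))"
  proof -
    have "a * (\<Sum>j\<le>m. f j) = (\<Sum>j\<le>m. x^j * qb x m j * a^(Suc m - j) * (-b)^j * x^(j*(j-1) div 2))"
      unfolding sum_distrib_left
    proof (rule sum.cong)
      fix j assume "j \<in> {..m}"
      hence "Suc m - j = Suc (m - j)" by auto
      moreover have "(-(b*x))^j = (-b)^j * x^j" by (metis minus_mult_left power_mult_distrib)
      ultimately show "a * f j = x^j * qb x m j * a^(Suc m - j) * (-b)^j * x^(j*(j-1) div 2)"
        unfolding f_def by (simp add: power_mult_distrib algebra_simps)
    qed simp
    also have "\<dots> = (\<Sum>j\<le>Suc m. x^j * qb x m j * a^(Suc m - j) * (-b)^j * x^(j*(j-1) div 2))"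
      by (simp add: qb_zero)
    finally show ?thesis .
  qed
  also have "- (b * (\<Sum>j\<le>m. f j)) = (\<Sum>j\<le>m. qb x m j * a^(Suc m - Suc j) * (-b)^(Suc j) * x^(Suc j*(Suc j-1) div 2))"
    unfolding sum_distrib_left sum_negf[symmetric]
  proof (rule sum.cong)
    fix j :: nat
    have "Suc j * (Suc j - 1) div 2 = j*(j-1) div 2 + j"
    proof -
      have "Suc j * j = j*(j-1) + 2*j" by (cases j) auto
      moreover have "even (j*(j-1))" by (cases j) auto
      ultimately show ?thesis by auto
    qed
    moreover have "(-(b*x))^j = (-b)^j * x^j" by (metis minus_mult_left power_mult_distrib)
    ultimately show "- (b * f j) = qb x m j * a^(Suc m - Suc j) * (-b)^(Suc j) * x^(Suc j*(Suc j-1) div 2)"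
      unfolding f_def by (simp add: power_add power_mult_distrib algebra_simps)
  qed simp
  also have "\<dots> = (\<Sum>j\<in>{1..Suc m}. qb x m (j - 1) * a^(Suc m - j) * (-b)^j * x^(j*(j-1) div 2))"
    by (rule sum.reindex_bij_witness[where i="\<lambda>j. j - 1" and j="Suc"]) auto
  also have "\<dots> = (\<Sum>j\<le>Suc m. (if j = 0 then 0 else qb x m (j - 1)) * a^(Suc m - j) * (-b)^j * x^(j*(j-1) div 2))"
  proof -
    have "{..Suc m} = insert 0 {1..Suc m}" by auto
    thus ?thesis by (simp add: sum.insert_if)
  qed
  finally have "(\<Prod>i<Suc m. (a - b * x^i)) =
      (\<Sum>j\<le>Suc m. x^j * qb x m j * a^(Suc m - j) * (-b)^j * x^(j*(j-1) div 2)) +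
      (\<Sum>j\<le>Suc m. (if j = 0 then 0 else qb x m (j - 1)) * a^(Suc m - j) * (-b)^j * x^(j*(j-1) div 2))"
    .
  also have "\<dots> = (\<Sum>j\<le>Suc m. qb x (Suc m) j * a^(Suc m - j) * (-b)^j * x^(j*(j-1) div 2))"
    unfolding sum.distrib[symmetric] by (rule sum.cong) (auto simp: algebra_simps)
  finally show ?case .
qed

lemma prod_lessThan_add: fixes a b :: nat shows "(\<Prod>i<a+b. f i) = (\<Prod>i<a. f i) * (\<Prod>i<b. f (a+i))"
  by (induction b) (simp_all add: mult.assoc)

lemma prod_pow2: "(\<Prod>i<n. (y::'a::comm_ring_1)^(2*i)) = y^(n*(n-1))"
proof (induction n)
  case 0 thus ?case by simp
next
  case (Suc n)
  have eq: "n*(n-1) + 2*n = Suc n * (Suc n - 1)" by (cases n) auto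
  have "(\<Prod>i<Suc n. y^(2*i)) = y^(n*(n-1)) * y^(2*n)" using Suc.IH by simp
  also have "\<dots> = y^(n*(n-1) + 2*n)" by (rule power_add[symmetric])
  also have "\<dots> = y^(Suc n * (Suc n - 1))" by (simp only: eq)
  finally show ?case .
qed

lemma finite_id:
  fixes y :: "'a::idom" assumes y: "y \<noteq> 0" and n: "n \<ge> 1"
  shows "(\<Sum>j\<le>2*n. (-1)^j * qb (y^2) (2*n) j * y^(nat((int j - int n)^2))) = (-1)^n * (\<Prod>i<n. (1 - y^(2*i+1)))^2"
proof -
  define Q where "Q = (\<Prod>i<n. (1 - y^(2*i+1)))"
  define E0 where "E0 = n*(n-1) + n*(2*n-1)"
  have th: "(\<Prod>i<2*n. (y^(2*n-1) - 1 * (y^2)^i)) =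
      (\<Sum>j\<le>2*n. qb (y^2) (2*n) j * (y^(2*n-1))^(2*n-j) * (-1)^j * (y^2)^(j*(j-1) div 2))"
    by (rule qbin_thm)
  have exps: "(2*n-1)*(2*n-j) + 2*(j*(j-1) div 2) = E0 + nat((int j - int n)^2)" if j: "j \<le> 2*n" for j
  proof -
    have ev: "even (j*(j-1))" by (cases j) auto
    hence e1: "2*(j*(j-1) div 2) = j*(j-1)" by simp
    have i1: "int (j*(j-1)) = int j * (int j - 1)" by (cases j) (auto simp: algebra_simps)
    have i2: "int ((2*n-1)*(2*n-j)) = (2*int n - 1) * (2 * int n - int j)" using j n by (simp add: of_nat_diff)
    have i4: "int (nat ((int j - int n)^2)) = (int j - int n)^2" by simp
    have i3: "int E0 = int n * (int n - 1) + int n * (2 * int n - 1)" unfolding E0_def using n by (simp add: of_nat_diff)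
    have "int ((2*n-1)*(2*n-j) + j*(j-1)) = int (E0 + nat((int j - int n)^2))"
      unfolding of_nat_add i1 i2 i3 i4 by (simp add: power2_eq_square algebra_simps)
    thus ?thesis unfolding e1 by linarith
  qed
  have rhs: "(\<Sum>j\<le>2*n. qb (y^2) (2*n) j * (y^(2*n-1))^(2*n-j) * (-1)^j * (y^2)^(j*(j-1) div 2))
      = y^E0 * (\<Sum>j\<le>2*n. (-1)^j * qb (y^2) (2*n) j * y^(nat((int j - int n)^2)))"
    unfolding sum_distrib_left
  proof (rule sum.cong)
    fix j assume "j \<in> {..2*n}"
    hence "(y^(2*n-1))^(2*n-j) * (y^2)^(j*(j-1) div 2) = y^E0 * y^(nat((int j - int n)^2))"
      using exps[of j] by (simp add: power_mult[symmetric] power_add[symmetric])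
    thus "qb (y^2) (2*n) j * (y^(2*n-1))^(2*n-j) * (-1)^j * (y^2)^(j*(j-1) div 2) =
          y^E0 * ((-1)^j * qb (y^2) (2*n) j * y^(nat((int j - int n)^2)))"
      by (metis (no_types, lifting) mult.commute mult.left_commute)
  qed simp
  have p1: "(\<Prod>i<n. (y^(2*n-1) - 1 * (y^2)^i)) = (-1)^n * y^(n*(n-1)) * Q"
  proof -
    have "(\<Prod>i<n. (y^(2*n-1) - 1 * (y^2)^i)) = (\<Prod>i<n. (-1) * y^(2*i) * (1 - y^(2*(n - Suc i)+1)))"
    proof (rule prod.cong)
      fix i assume "i \<in> {..<n}"
      hence "2*i + (2*(n - Suc i)+1) = 2*n-1" by auto
      hence "y^(2*n-1) = y^(2*i) * y^(2*(n - Suc i)+1)" by (metis power_add)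
      moreover have pw2: "(y^2)^i = y^(2*i)" by (simp add: power_mult)
      ultimately show "y^(2*n-1) - 1 * (y^2)^i = (-1) * y^(2*i) * (1 - y^(2*(n - Suc i)+1))"
        by (simp add: algebra_simps)
    qed simp
    also have "\<dots> = (\<Prod>i<n. (-1::'a)) * (\<Prod>i<n. y^(2*i)) * (\<Prod>i<n. (1 - y^(2*(n - Suc i)+1)))"
      by (simp only: prod.distrib)
    also have "(\<Prod>i<n. (-1::'a)) = (-1)^n" by simp
    also have "(\<Prod>i<n. (1 - y^(2*(n - Suc i)+1))) = Q"
      unfolding Q_def by (rule prod.nat_diff_reindex[where g="\<lambda>i. 1 - y^(2*i+1)"])
    finally show ?thesis by (simp add: prod_pow2)
  qed
  have p2: "(\<Prod>i<n. (y^(2*n-1) - 1 * (y^2)^(n+i))) = y^(n*(2*n-1)) * Q"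
  proof -
    have "(\<Prod>i<n. (y^(2*n-1) - 1 * (y^2)^(n+i))) = (\<Prod>i<n. y^(2*n-1) * (1 - y^(2*i+1)))"
    proof (rule prod.cong)
      fix i assume "i \<in> {..<n}"
      have "2*(n+i) = (2*n-1) + (2*i+1)" using n by auto
      hence "(y^2)^(n+i) = y^(2*n-1) * y^(2*i+1)" by (metis power_add power_mult)
      thus "y^(2*n-1) - 1 * (y^2)^(n+i) = y^(2*n-1) * (1 - y^(2*i+1))" by (simp add: algebra_simps)
    qed simp
    also have "\<dots> = y^(n*(2*n-1)) * Q" unfolding Q_def by (simp add: prod.distrib power_mult[symmetric] mult.commute)
    finally show ?thesis .
  qed
  have "(\<Prod>i<2*n. (y^(2*n-1) - 1 * (y^2)^i)) = (\<Prod>i<n. (y^(2*n-1) - 1 * (y^2)^i)) * (\<Prod>i<n. (y^(2*n-1) - 1 * (y^2)^(n+i)))"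
    using prod_lessThan_add[of "\<lambda>i. y^(2*n-1) - 1 * (y^2)^i" n n] by (simp only: mult_2)
  also have "\<dots> = ((-1)^n * y^(n*(n-1)) * Q) * (y^(n*(2*n-1)) * Q)" by (simp only: p1 p2)
  also have "\<dots> = (-1)^n * (y^(n*(n-1)) * y^(n*(2*n-1))) * Q^2" by (simp add: power2_eq_square)
  also have "y^(n*(n-1)) * y^(n*(2*n-1)) = y^E0" unfolding E0_def by (rule power_add[symmetric])
  finally have pe: "(\<Prod>i<2*n. (y^(2*n-1) - 1 * (y^2)^i)) = (-1)^n * y^E0 * Q^2" .
  have "y^E0 * (\<Sum>j\<le>2*n. (-1)^j * qb (y^2) (2*n) j * y^(nat((int j - int n)^2))) = (-1)^n * y^E0 * Q^2"
    using th rhs pe by metis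
  hence "y^E0 * (\<Sum>j\<le>2*n. (-1)^j * qb (y^2) (2*n) j * y^(nat((int j - int n)^2))) = y^E0 * ((-1)^n * Q^2)"
    by (simp add: mult.left_commute mult.assoc)
  thus ?thesis unfolding Q_def using y by simp
qed




unbundle fps_syntax

definition eqm :: "nat \<Rightarrow> rat fps \<Rightarrow> rat fps \<Rightarrow> bool" where
  "eqm M f g \<longleftrightarrow> (\<forall>i<M. f $ i = g $ i)"

lemma eqm_refl[simp]: "eqm M f f" by (simp add: eqm_def)
lemma eqm_sym: "eqm M f g \<Longrightarrow> eqm M g f" by (simp add: eqm_def)
lemma eqm_trans: "eqm M f g \<Longrightarrow> eqm M g h \<Longrightarrow> eqm M f h" by (simp add: eqm_def)
lemma eqm_mono: "eqm M f g \<Longrightarrow> M' \<le> M \<Longrightarrow> eqm M' f g" by (simp add: eqm_def)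
lemma eqm_add: "eqm M f g \<Longrightarrow> eqm M f' g' \<Longrightarrow> eqm M (f + f') (g + g')" by (simp add: eqm_def)
lemma eqm_diff: "eqm M f g \<Longrightarrow> eqm M f' g' \<Longrightarrow> eqm M (f - f') (g - g')" by (simp add: eqm_def)
lemma eqm_mult: assumes "eqm M f g" "eqm M f' g'" shows "eqm M (f * f') (g * g')"
  unfolding eqm_def
proof (intro allI impI)
  fix i assume i: "i < M"
  show "(f * f') $ i = (g * g') $ i" unfolding fps_mult_nth
    by (rule sum.cong) (use assms i in \<open>auto simp: eqm_def\<close>)
qed
lemma eqm_power: "eqm M f g \<Longrightarrow> eqm M (f ^ n) (g ^ n)"
  by (induction n) (auto intro: eqm_mult)
lemma eqm_sum: "(\<And>x. x \<in> A \<Longrightarrow> eqm M (f x) (g x)) \<Longrightarrow> eqm M (sum f A) (sum g A)"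
  by (induction A rule: infinite_finite_induct) (auto intro: eqm_add)
lemma eqm_prod: "(\<And>x. x \<in> A \<Longrightarrow> eqm M (f x) (g x)) \<Longrightarrow> eqm M (prod f A) (prod g A)"
  by (induction A rule: infinite_finite_induct) (auto intro: eqm_mult)
lemma eqm_all: "(\<And>M. eqm M f g) \<Longrightarrow> f = g"
  by (rule fps_ext) (meson eqm_def lessI)
lemma eqm_Xpow: "M \<le> n \<Longrightarrow> eqm M (fps_X ^ n * f) 0"
  by (simp add: eqm_def fps_X_power_mult_nth)
lemma eqm_Xpow': "M \<le> n \<Longrightarrow> eqm M (fps_X ^ n) 0"
  using eqm_Xpow[of M n 1] by simp

definition pp :: "nat \<Rightarrow> nat \<Rightarrow> rat fps" where
  "pp k N = (\<Prod>j<N. (1 - fps_X^k * (fps_X^k)^j))"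

lemma pp_Suc: "pp k (Suc N) = pp k N * (1 - fps_X^(k * Suc N))"
  unfolding pp_def by (simp add: power_mult[symmetric] power_add[symmetric] mult.commute)

lemma pp_step: assumes "k \<ge> 1" "n \<le> N" shows "eqm (Suc n) (pp k N) (pp k (Suc N))"
proof -
  have "Suc N \<le> k * Suc N" using assms(1) by (metis mult_1 mult_le_mono1)
  hence "Suc n \<le> k * Suc N" using assms(2) by linarith
  hence "eqm (Suc n) (1 - fps_X^(k * Suc N)) (1 - 0)"
    by (intro eqm_diff eqm_refl eqm_Xpow')
  hence "eqm (Suc n) (pp k N * (1 - fps_X^(k * Suc N))) (pp k N * (1 - 0))"
    by (intro eqm_mult eqm_refl)
  thus ?thesis by (simp add: pp_Suc eqm_sym)
qed

lemma pp_stable: assumes "k \<ge> 1" "n \<le> N" shows "eqm (Suc n) (pp k n) (pp k N)"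
  using assms(2)
proof (induction N rule: dec_induct)
  case base thus ?case by simp
next
  case (step N) thus ?case using pp_step[OF assms(1) step(1)] eqm_trans by blast
qed

lemma qpoch_pp: assumes "k \<ge> 1" shows "eqm (Suc N) (pp k N) (qpoch_inf (fps_X^k) (fps_X^k))"
proof -
  define L where "L = Abs_fps (\<lambda>n. pp k n $ n)"
  have lim: "(\<lambda>N. pp k N) \<longlonglongrightarrow> L"
  proof (rule tendsto_fpsI)
    fix n
    show "eventually (\<lambda>N. pp k N $ n = L $ n) sequentially"
      unfolding eventually_sequentially L_def
    proof (rule exI[of _ n], intro allI impI)
      fix N assume nN: "n \<le> N"
      show "pp k N $ n = Abs_fps (\<lambda>n. pp k n $ n) $ n" using pp_stable[OF assms nN] by (simp add: eqm_def)
    qed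
  qed
  have "qpoch_inf (fps_X^k) (fps_X^k) = L"
    unfolding qpoch_inf_def using lim unfolding pp_def by (rule limI)
  moreover have "eqm (Suc N) (pp k N) L"
    unfolding eqm_def L_def using pp_stable[OF assms] by (auto simp: eqm_def less_Suc_eq_le)
  ultimately show ?thesis by simp
qed

definition gf :: "('b \<Rightarrow> nat) \<Rightarrow> ('b \<Rightarrow> rat) \<Rightarrow> rat fps" where
  "gf d w = Abs_fps (\<lambda>n. \<Sum>x\<in>{x. d x = n}. w x)"

definition sgnp :: "int \<Rightarrow> rat" where
  "sgnp t = (if even t then 1 else -1)"

definition th :: "nat \<Rightarrow> rat fps" where
  "th k = gf (\<lambda>t::int. k * nat (t^2)) sgnp"

abbreviation PP :: "nat \<Rightarrow> rat fps" where
  "PP k \<equiv> qpoch_inf (fps_X^k) (fps_X^k)"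

lemma pp_qq: "pp k N = qq (fps_X^k) N"
  unfolding pp_def qq_def by (simp add: mult.commute)

lemma PP_eqm: "k \<ge> 1 \<Longrightarrow> eqm (Suc N) (qq (fps_X^k) N) (PP k)"
  using qpoch_pp[of k N] by (simp add: pp_qq)

lemma PP_0: "k \<ge> 1 \<Longrightarrow> PP k $ 0 = 1"
  using PP_eqm[of k 0] by (simp add: eqm_def)

lemma prod_even_odd: fixes n :: nat shows "(\<Prod>i<2*n. f i) = (\<Prod>i<n. f (2*i) * f (2*i+1))"
  by (induction n) (simp_all add: mult.assoc)

lemma qq_split: "qq y (2*n) = (\<Prod>i<n. (1 - y^(2*i+1))) * qq (y^2) n"
proof -
  have a: "\<And>i. (y^2)^(Suc i) = y^(Suc (2*i+1))"
  proof -
    fix i :: nat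
    have "(y^2)^(Suc i) = y^(2*Suc i)" by (rule power_mult[symmetric])
    thus "(y^2)^(Suc i) = y^(Suc (2*i+1))" by simp
  qed
  show ?thesis unfolding qq_def prod_even_odd prod.distrib a by simp
qed

lemma neg1_pow_nth: "((-1::rat fps)^j * f) $ i = (-1)^j * f $ i"
  by (induction j arbitrary: f) (auto simp: mult.assoc)

lemma qb_P: assumes k: "k \<ge> 1" and j: "j \<le> m" "M \<le> Suc j" "M \<le> Suc (m - j)" "M \<le> Suc m"
  shows "eqm M (qb (fps_X^(2*k)) m j * PP (2*k)) 1"
proof -
  let ?x = "fps_X^(2*k) :: rat fps"
  let ?P = "PP (2*k)"
  have k2: "2*k \<ge> 1" using k by simp
  have e1: "eqm M (qq ?x j) ?P" using PP_eqm[OF k2, of j] j(2) eqm_mono by blast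
  have e2: "eqm M (qq ?x (m-j)) ?P" using PP_eqm[OF k2, of "m-j"] j(3) eqm_mono by blast
  have e3: "eqm M (qq ?x m) ?P" using PP_eqm[OF k2, of m] j(4) eqm_mono by blast
  have "eqm M (qb ?x m j * qq ?x j * qq ?x (m - j)) (qb ?x m j * ?P * ?P)"
    by (intro eqm_mult e1 e2 eqm_refl)
  hence "eqm M (qq ?x m) (qb ?x m j * ?P * ?P)" unfolding qb_prod[OF j(1), of ?x] .
  hence "eqm M (qb ?x m j * ?P * ?P) ?P" using e3 eqm_sym eqm_trans by blast
  hence "eqm M (qb ?x m j * ?P * ?P * inverse ?P) (?P * inverse ?P)"
    by (intro eqm_mult eqm_refl)
  moreover have "?P * inverse ?P = 1" using PP_0[OF k2] by (intro inverse_mult_eq_1') simp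
  ultimately show ?thesis by (simp add: mult.assoc)
qed

lemma th_nth: "th k $ i = (\<Sum>t\<in>{t::int. k * nat (t^2) = i}. sgnp t)"
  unfolding th_def gf_def by simp

lemma theta_trunc:
  assumes k: "k \<ge> 1" and M: "M \<le> n"
  shows "eqm M (\<Sum>j\<le>2*n. (-1)^j * (fps_X^k)^(nat((int j - int n)^2))) ((-1)^n * th k)"
  unfolding eqm_def
proof (intro allI impI)
  fix i assume i: "i < M"
  define D where "D j = nat((int j - int n)^2)" for j
  have "(\<Sum>j\<le>2*n. (-1)^j * (fps_X^k)^(nat((int j - int n)^2))) $ i
      = (\<Sum>j\<le>2*n. (-1)^j * (if k * D j = i then 1 else 0 :: rat))"
    unfolding fps_sum_nth D_def by (intro sum.cong refl) (simp add: neg1_pow_nth power_mult[symmetric] mult.commute)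
  also have "\<dots> = (\<Sum>j\<in>{j\<in>{..2*n}. k * D j = i}. (-1)^j)"
    by (subst sum.inter_filter) (auto intro!: sum.cong)
  also have "\<dots> = (\<Sum>t\<in>{t::int. k * nat (t^2) = i}. (-1)^n * sgnp t)"
  proof (rule sum.reindex_bij_witness[where i="\<lambda>t. nat (t + int n)" and j="\<lambda>j. int j - int n"])
    fix t :: int assume t: "t \<in> {t. k * nat (t^2) = i}"
    have "\<bar>t\<bar> \<le> t^2"
    proof (cases "t = 0")
      case False
      hence "1 \<le> \<bar>t\<bar>" by simp
      hence "\<bar>t\<bar> * 1 \<le> \<bar>t\<bar> * \<bar>t\<bar>" by (intro mult_left_mono) auto
      thus ?thesis by (simp add: power2_eq_square abs_mult_self_eq)
    qed simp
    also have "t^2 \<le> int (k * nat (t^2))" using k by (simp add: mult_le_cancel_right1 of_nat_mult)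
    finally have a: "\<bar>t\<bar> \<le> int (k * nat (t^2))" .
    have b: "k * nat (t^2) < M" using t i by simp
    have tn: "\<bar>t\<bar> < int n" using a b M by linarith
    have tn0: "int (nat (t + int n)) = t + int n" using tn by simp
    show "int (nat (t + int n)) - int n = t" using tn0 by simp
    have "int (nat (t + int n)) \<le> int (2*n)" using tn0 tn by simp
    hence le: "nat (t + int n) \<le> 2*n" by (simp only: of_nat_le_iff)
    have "D (nat (t + int n)) = nat (t^2)" unfolding D_def tn0 by simp
    thus "nat (t + int n) \<in> {j \<in> {..2*n}. k * D j = i}" using le t by simp
  next
    fix j assume j: "j \<in> {j \<in> {..2*n}. k * D j = i}"
    thus "nat (int j - int n + int n) = j" by simp
    show "int j - int n \<in> {t. k * nat (t^2) = i}" using j unfolding D_def by simp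
    show "(-1)^n * sgnp (int j - int n) = (-1::rat)^j"
      unfolding minus_one_power_iff sgnp_def by auto
  qed
  also have "\<dots> = ((-1)^n * th k) $ i"
    by (simp add: neg1_pow_nth th_nth sum_distrib_left)
  finally show "(\<Sum>j\<le>2*n. (-1)^j * (fps_X^k)^(nat((int j - int n)^2))) $ i = ((-1)^n * th k) $ i" .
qed





lemma abs_le_sq: "\<bar>t::int\<bar> \<le> t^2"
proof (cases "t = 0")
  case False
  hence "1 \<le> \<bar>t\<bar>" by simp
  hence "\<bar>t\<bar> * 1 \<le> \<bar>t\<bar> * \<bar>t\<bar>" by (intro mult_left_mono) auto
  thus ?thesis by (simp add: power2_eq_square abs_mult_self_eq)
qed simp

lemma eqm_Xpow_r: "M \<le> n \<Longrightarrow> eqm M (f * fps_X ^ n) 0"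
  using eqm_Xpow[of M n f] by (simp add: mult.commute)

lemma neg1_sq: "((-1::'a::comm_ring_1)^n) * ((-1)^n) = 1"
  by (metis power_add power_minus1_even mult_2)

lemma gauss: assumes k: "k \<ge> 1" shows "PP k ^ 2 = th k * PP (2*k)"
proof (rule eqm_all)
  fix M :: nat
  define n where "n = 2*M+1"
  define y where "y = (fps_X^k :: rat fps)"
  define P where "P = PP (2*k)"
  define D where "D j = nat((int j - int n)^2)" for j
  define Q where "Q = (\<Prod>i<n. (1 - y^(2*i+1)))"
  define S where "S = (\<Sum>j\<le>2*n. (-1)^j * qb (y^2) (2*n) j * y^(D j))"
  have y2: "y^2 = fps_X^(2*k)" unfolding y_def by (simp add: power_mult[symmetric] mult.commute)
  have y0: "y \<noteq> 0" unfolding y_def by simp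
  have n1: "n \<ge> 1" unfolding n_def by simp
  have FI: "S = (-1)^n * Q^2" unfolding S_def Q_def D_def by (rule finite_id[OF y0 n1])
  have split: "qq y (2*n) = Q * qq (y^2) n" unfolding Q_def by (rule qq_split)
  have k2: "2*k \<ge> 1" using k by simp
  have A: "eqm M (S * P) ((-1)^n * th k)"
  proof -
    have s1: "S * P = (\<Sum>j\<le>2*n. (-1)^j * (qb (y^2) (2*n) j * P) * y^(D j))"
      unfolding S_def sum_distrib_right by (intro sum.cong refl) (simp only: mult.assoc mult.commute mult.left_commute)
    have s2: "eqm M (\<Sum>j\<le>2*n. (-1)^j * (qb (y^2) (2*n) j * P) * y^(D j)) (\<Sum>j\<le>2*n. (-1)^j * y^(D j))"
    proof (rule eqm_sum)
      fix j assume j: "j \<in> {..2*n}"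
      have "eqm M ((-1)^j * (qb (y^2) (2*n) j * P) * y^(D j)) ((-1)^j * 1 * y^(D j))"
      proof (cases "M \<le> k * D j")
        case True
        have yD: "y^(D j) = fps_X^(k * D j)" unfolding y_def by (simp add: power_mult)
        have z1: "eqm M ((-1)^j * (qb (y^2) (2*n) j * P) * fps_X^(k * D j)) 0" by (rule eqm_Xpow_r[OF True])
        have z2: "eqm M ((-1)^j * 1 * fps_X^(k * D j)) 0" by (rule eqm_Xpow_r[OF True])
        show ?thesis unfolding yD by (rule eqm_trans[OF z1 eqm_sym[OF z2]])
      next
        case False
        have "1 * D j \<le> k * D j" using k by (rule mult_le_mono1)
        hence "D j < M" using False by linarith
        hence "(int j - int n)^2 < int M" unfolding D_def by linarith
        hence "\<bar>int j - int n\<bar> < int M" using abs_le_sq[of "int j - int n"] by linarith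
        hence lo: "int n - int M < int j" and hi: "int j < int n + int M" by linarith+
        have jn: "j \<le> 2*n" using j by simp
        have nM: "int n = 2 * int M + 1" unfolding n_def by simp
        have "int M \<le> int (Suc j)" using lo nM by simp
        hence c1: "M \<le> Suc j" by (simp only: of_nat_le_iff)
        have "int (2*n - j) = 2 * int n - int j" using jn by (simp add: of_nat_diff)
        hence "int M \<le> int (Suc (2*n - j))" using hi nM by simp
        hence c2: "M \<le> Suc (2*n - j)" by (simp only: of_nat_le_iff)
        have c3: "M \<le> Suc (2*n)" unfolding n_def by simp
        note c = c1 c2 c3
        have "eqm M (qb (fps_X^(2*k)) (2*n) j * P) 1" unfolding P_def
          by (rule qb_P[OF k _ c]) (use j in auto)
        thus ?thesis unfolding y2 by (intro eqm_mult[OF eqm_mult[OF eqm_refl]] eqm_refl)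
      qed
      thus "eqm M ((-1)^j * (qb (y^2) (2*n) j * P) * y^(D j)) ((-1)^j * y^(D j))" by (simp only: mult_1_right)
    qed
    have Mn: "M \<le> n" unfolding n_def by simp
    have s3: "eqm M (\<Sum>j\<le>2*n. (-1)^j * y^(D j)) ((-1)^n * th k)"
      unfolding y_def D_def by (rule theta_trunc[OF k Mn])
    show ?thesis unfolding s1 by (rule eqm_trans[OF s2 s3])
  qed
  have e1: "eqm M (qq y (2*n)) (PP k)" using PP_eqm[OF k, of "2*n"] unfolding y_def
    by (rule eqm_mono) (simp add: n_def)
  have e2: "eqm M (qq (y^2) n) P" using PP_eqm[OF k2, of n] unfolding y2 P_def
    by (rule eqm_mono) (simp add: n_def)
  have f1: "eqm M (PP k ^ 2) (qq y (2*n) ^ 2)" using e1 eqm_sym eqm_power by blast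
  have f2: "qq y (2*n) ^ 2 = (-1)^n * S * qq (y^2) n ^ 2"
  proof -
    have "qq y (2*n) ^ 2 = ((-1)^n * (-1)^n) * Q^2 * qq (y^2) n ^ 2"
      unfolding split neg1_sq by (simp add: power_mult_distrib)
    also have "\<dots> = (-1)^n * S * qq (y^2) n ^ 2" unfolding FI by (simp only: mult.assoc)
    finally show ?thesis .
  qed
  have f3: "eqm M ((-1)^n * S * qq (y^2) n ^ 2) ((-1)^n * S * P ^ 2)"
    by (intro eqm_mult eqm_refl eqm_power e2)
  have f4: "(-1)^n * S * P ^ 2 = (-1)^n * (S * P) * P" by (simp add: power2_eq_square mult.assoc)
  have f5: "eqm M ((-1)^n * (S * P) * P) ((-1)^n * ((-1)^n * th k) * P)"
    by (intro eqm_mult eqm_refl A)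
  have f6: "(-1)^n * ((-1)^n * th k) * P = th k * P"
  proof -
    have "(-1)^n * ((-1)^n * th k) * P = ((-1)^n * (-1)^n) * th k * P" by (simp only: mult.assoc)
    thus ?thesis unfolding neg1_sq by simp
  qed
  have "eqm M (PP k ^ 2) ((-1)^n * S * P ^ 2)" using eqm_trans[OF f1[unfolded f2] f3] .
  hence "eqm M (PP k ^ 2) ((-1)^n * ((-1)^n * th k) * P)" unfolding f4 using f5 eqm_trans by blast
  hence "eqm M (PP k ^ 2) (th k * P)" unfolding f6 .
  thus "eqm M (PP k ^ 2) (th k * PP (2*k))" unfolding P_def .
qed





lemma sq_mod4: "(t::int)^2 mod 4 = (if even t then 0 else 1)"
proof (cases "even t")
  case True then obtain s where "t = 2*s" by blast
  thus ?thesis by (simp add: power2_eq_square)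
next
  case False then obtain s where s: "t = 2*s+1" using oddE by blast
  define r where "r = s*s+s"
  have "t^2 = 4*r + 1" unfolding s r_def by (simp add: power2_eq_square algebra_simps)
  moreover have "(4*r+1) mod 4 = 1" by presburger
  ultimately show ?thesis using False by simp
qed

lemma sq_mod8: "odd (t::int) \<Longrightarrow> t^2 mod 8 = 1"
proof -
  assume "odd t" then obtain s where s: "t = 2*s+1" using oddE by blast
  have e: "even (s*s+s)" by auto
  then obtain r where r: "s*s+s = 2*r" by blast
  have "t^2 = 8*r + 1" unfolding s using r by (simp add: power2_eq_square algebra_simps)
  moreover have "(8*r+1) mod 8 = 1" by presburger
  ultimately show ?thesis by simp
qed

lemma par1:
  fixes X Y Z W a b u v n :: int
  assumes "X mod 4 = (if even a then 0 else 1)" "Y mod 4 = (if even b then 0 else 1)"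
    "Z mod 4 = (if even u then 0 else 1)" "W mod 4 = (if even v then 0 else 1)"
    "X + Y + Z + W = n" "n mod 4 = 1" "even u = even v"
  shows "even u \<and> even v \<and> (even a \<noteq> even b)"
  using assms by presburger

lemma gf_nth: "gf d w $ n = (\<Sum>x\<in>{x. d x = n}. w x)"
  unfolding gf_def by simp

lemma fiber_split: fixes d :: "'a \<Rightarrow> nat" and d' :: "'b \<Rightarrow> nat" shows "{p. (case p of (x,y) \<Rightarrow> d x + d' y) = n} = (\<Union>i\<in>{0..n}. {x. d x = i} \<times> {y. d' y = n - i})"
  by auto

lemma gf_fin:
  fixes d :: "'a \<Rightarrow> nat" and d' :: "'b \<Rightarrow> nat"
  assumes "\<And>n. finite {x. d x = n}" "\<And>n. finite {y. d' y = n}"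
  shows "finite {p. (case p of (x,y) \<Rightarrow> d x + d' y) = n}"
  unfolding fiber_split using assms by auto

lemma gf_mult:
  fixes d :: "'a \<Rightarrow> nat" and d' :: "'b \<Rightarrow> nat"
  assumes f1: "\<And>n. finite {x. d x = n}" and f2: "\<And>n. finite {y. d' y = n}"
  shows "gf d w * gf d' w' = gf (\<lambda>(x,y). d x + d' y) (\<lambda>(x,y). w x * w' y)"
proof (rule fps_ext)
  fix n
  have "(gf d w * gf d' w') $ n = (\<Sum>i=0..n. (\<Sum>x\<in>{x. d x = i}. w x) * (\<Sum>y\<in>{y. d' y = n - i}. w' y))"
    unfolding fps_mult_nth gf_nth ..
  also have "\<dots> = (\<Sum>i=0..n. (\<Sum>p\<in>{x. d x = i} \<times> {y. d' y = n - i}. (\<lambda>(x,y). w x * w' y) p))"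
    by (intro sum.cong refl) (simp add: sum_product sum.cartesian_product)
  also have "\<dots> = (\<Sum>p\<in>(\<Union>i\<in>{0..n}. {x. d x = i} \<times> {y. d' y = n - i}). (\<lambda>(x,y). w x * w' y) p)"
    by (rule sum.UNION_disjoint[symmetric]) (use f1 f2 in auto)
  also have "\<dots> = gf (\<lambda>(x,y). d x + d' y) (\<lambda>(x,y). w x * w' y) $ n"
    unfolding gf_nth fiber_split[symmetric] ..
  finally show "(gf d w * gf d' w') $ n = gf (\<lambda>(x,y). d x + d' y) (\<lambda>(x,y). w x * w' y) $ n" .
qed

lemma th_fin: assumes "k \<ge> 1" shows "finite {t::int. k * nat (t^2) = n}"
proof (rule finite_subset[of _ "{-int n..int n}"])
  show "{t::int. k * nat (t^2) = n} \<subseteq> {-int n..int n}"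
  proof
    fix t :: int assume "t \<in> {t. k * nat (t^2) = n}"
    hence t: "k * nat (t^2) = n" by simp
    have "1 * nat (t^2) \<le> k * nat (t^2)" using assms by (rule mult_le_mono1)
    hence "t^2 \<le> int n" using t by linarith
    hence "\<bar>t\<bar> \<le> int n" using abs_le_sq[of t] by linarith
    thus "t \<in> {-int n..int n}" by auto
  qed
qed simp

definition d4 :: "((int \<times> int) \<times> int) \<times> int \<Rightarrow> nat" where
  "d4 p = (case p of (((a,b),c),d) \<Rightarrow> nat (a^2) + nat (b^2) + 2 * nat (c^2) + 2 * nat (d^2))"
definition w4 :: "((int \<times> int) \<times> int) \<times> int \<Rightarrow> rat" where
  "w4 p = (case p of (((a,b),c),d) \<Rightarrow> sgnp a * sgnp b * sgnp c * sgnp d)"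

lemma th12: "th 1 * th 1 * th 2 * th 2 = gf d4 w4"
proof -
  have f1: "\<And>n. finite {t::int. 1 * nat (t^2) = n}" by (rule th_fin) simp
  have f2: "\<And>n. finite {t::int. 2 * nat (t^2) = n}" by (rule th_fin) simp
  define G1 where "G1 = gf (\<lambda>t::int. 1 * nat (t^2)) sgnp"
  define G2 where "G2 = gf (\<lambda>t::int. 2 * nat (t^2)) sgnp"
  have tt: "th 1 * th 1 * th 2 * th 2 = G1 * G1 * G2 * G2" unfolding G1_def G2_def th_def ..
  have g1: "G1 * G1 = gf (\<lambda>(x,y). 1 * nat (x^2) + 1 * nat (y^2)) (\<lambda>(x,y). sgnp x * sgnp y)"
    unfolding G1_def by (rule gf_mult[OF f1 f1])
  have f11: "\<And>n. finite {p. (\<lambda>(x,y). 1 * nat (x^2) + 1 * nat ((y::int)^2)) p = n}"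
    using gf_fin[OF f1 f1] by simp
  have g2: "G1 * G1 * G2 = gf (\<lambda>(p,z). (\<lambda>(x,y). 1 * nat (x^2) + 1 * nat (y^2)) p + 2 * nat (z^2))
      (\<lambda>(p,z). (\<lambda>(x,y). sgnp x * sgnp y) p * sgnp z)"
    unfolding g1 G2_def by (rule gf_mult[OF f11 f2])
  have f12: "\<And>n. finite {q. (\<lambda>(p,z). (\<lambda>(x,y). 1 * nat (x^2) + 1 * nat (y^2)) p + 2 * nat ((z::int)^2)) q = n}"
    using gf_fin[OF f11 f2] by simp
  have "th 1 * th 1 * th 2 * th 2 = gf (\<lambda>(q,z). (\<lambda>(p,z). (\<lambda>(x,y). 1 * nat (x^2) + 1 * nat (y^2)) p + 2 * nat (z^2)) q + 2 * nat (z^2))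
      (\<lambda>(q,z). (\<lambda>(p,z). (\<lambda>(x,y). sgnp x * sgnp y) p * sgnp z) q * sgnp z)"
    unfolding tt g2 by (unfold G2_def, rule gf_mult[OF f12 f2])
  also have "\<dots> = gf d4 w4"
  proof -
    have "(\<lambda>(q,z). (\<lambda>(p,z). (\<lambda>(x,y). 1 * nat (x^2) + 1 * nat (y^2)) p + 2 * nat (z^2)) q + 2 * nat ((z::int)^2)) = d4"
      unfolding d4_def by (auto simp: fun_eq_iff)
    moreover have "(\<lambda>(q,z). (\<lambda>(p,z). (\<lambda>(x,y). sgnp x * sgnp y) p * sgnp z) q * sgnp z) = w4"
      unfolding w4_def by (auto simp: fun_eq_iff)
    ultimately show ?thesis by simp
  qed
  finally show ?thesis .
qed

lemma F_eqs:
  shows "(qpoch_inf fps_X fps_X) ^ 4 * (qpoch_inf (fps_X^2) (fps_X^2)) ^ 2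
        / (qpoch_inf (fps_X^4) (fps_X^4)) ^ 2 = th 1 * th 1 * th 2 * th 2"
    and "(qpoch_inf fps_X fps_X) ^ 4 * (qpoch_inf (fps_X^2) (fps_X^2)) ^ 4
        / (qpoch_inf (fps_X^4) (fps_X^4)) ^ 3 = (th 1 * th 1 * th 2 * th 2) * th 2"
proof -
  have P1: "qpoch_inf fps_X fps_X = PP 1" by simp
  have g1: "PP 1 ^ 2 = th 1 * PP 2" using gauss[of 1] by simp
  have g2: "PP 2 ^ 2 = th 2 * PP 4" using gauss[of 2] by simp
  have p4: "PP 4 $ 0 = 1" by (rule PP_0) simp
  have n1: "PP 1 ^ 4 * PP 2 ^ 2 = (th 1 * th 1 * th 2 * th 2) * PP 4 ^ 2"
  proof -
    have "PP 1 ^ 4 * PP 2 ^ 2 = (PP 1 ^ 2)^2 * PP 2 ^ 2" by (simp add: power_mult[symmetric])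
    also have "\<dots> = th 1 ^ 2 * (PP 2 ^ 2)^2" unfolding g1 by (simp add: power_mult_distrib algebra_simps power_mult[symmetric])
    also have "\<dots> = (th 1 * th 1 * th 2 * th 2) * PP 4 ^ 2" unfolding g2 by (simp add: power_mult_distrib power2_eq_square algebra_simps)
    finally show ?thesis .
  qed
  have n2: "PP 1 ^ 4 * PP 2 ^ 4 = ((th 1 * th 1 * th 2 * th 2) * th 2) * PP 4 ^ 3"
  proof -
    have "PP 1 ^ 4 * PP 2 ^ 4 = (PP 1 ^ 2)^2 * (PP 2 ^ 2) * (PP 2 ^ 2)" by (simp add: power_mult[symmetric] power_add[symmetric])
    also have "\<dots> = th 1 ^ 2 * (PP 2 ^ 2) * (PP 2 ^ 2) * (PP 2 ^ 2)" unfolding g1 by (simp add: power_mult_distrib algebra_simps power_mult[symmetric])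
    also have "\<dots> = ((th 1 * th 1 * th 2 * th 2) * th 2) * PP 4 ^ 3" unfolding g2 by (simp add: power_mult_distrib power2_eq_square power3_eq_cube algebra_simps)
    finally show ?thesis .
  qed
  have d2: "(PP 4 ^ 2) $ 0 \<noteq> 0" using p4 by (simp add: fps_nth_power_0)
  have d3: "(PP 4 ^ 3) $ 0 \<noteq> 0" using p4 by (simp add: fps_nth_power_0)
  show "(qpoch_inf fps_X fps_X) ^ 4 * (qpoch_inf (fps_X^2) (fps_X^2)) ^ 2
        / (qpoch_inf (fps_X^4) (fps_X^4)) ^ 2 = th 1 * th 1 * th 2 * th 2"
    unfolding P1 fps_divide_unit[OF d2] n1 using inverse_mult_eq_1'[OF d2] by (simp add: mult.assoc)
  show "(qpoch_inf fps_X fps_X) ^ 4 * (qpoch_inf (fps_X^2) (fps_X^2)) ^ 4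
        / (qpoch_inf (fps_X^4) (fps_X^4)) ^ 3 = (th 1 * th 1 * th 2 * th 2) * th 2"
    unfolding P1 fps_divide_unit[OF d3] n2 using inverse_mult_eq_1'[OF d3] by (simp add: mult.assoc)
qed

lemma C1_gf: "C1 n = gf d4 w4 $ n"
  unfolding C1_def F_eqs(1) th12 ..

lemma C2_gf: "C2 n = (gf d4 w4 * th 2) $ n"
  unfolding C2_def F_eqs(2) th12 ..

definition R :: "nat \<Rightarrow> (int \<times> int \<times> int \<times> int) set" where
  "R n = {(a,b,u,v). a^2 + b^2 + u^2 + v^2 = int n}"

definition R' :: "nat \<Rightarrow> (int \<times> int \<times> int \<times> int) set" where
  "R' n = {(a,b,u,v). a^2 + b^2 + u^2 + v^2 = int n \<and> even u = even v}"

definition wt :: "int \<times> int \<times> int \<times> int \<Rightarrow> rat" where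
  "wt q = (case q of (a,b,u,v) \<Rightarrow> sgnp a * sgnp b * sgnp u)"

lemma sq_le_bound: "(t::int)^2 \<le> N \<Longrightarrow> t \<in> {-N..N}"
  using abs_le_sq[of t] by auto

lemma R_fin: "finite (R n)"
proof (rule finite_subset[of _ "{-int n..int n} \<times> {-int n..int n} \<times> {-int n..int n} \<times> {-int n..int n}"])
  show "R n \<subseteq> {-int n..int n} \<times> {-int n..int n} \<times> {-int n..int n} \<times> {-int n..int n}"
  proof
    fix q assume "q \<in> R n"
    then obtain a b u v where q: "q = (a,b,u,v)" and e: "a^2 + b^2 + u^2 + v^2 = int n"
      unfolding R_def by auto
    have "a^2 \<le> int n" "b^2 \<le> int n" "u^2 \<le> int n" "v^2 \<le> int n" using e
      by (smt (verit) zero_le_power2)+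
    thus "q \<in> {-int n..int n} \<times> {-int n..int n} \<times> {-int n..int n} \<times> {-int n..int n}"
      unfolding q using sq_le_bound by blast
  qed
qed simp

lemma R'_sub: "R' n \<subseteq> R n" unfolding R'_def R_def by auto

lemma R'_fin: "finite (R' n)" using finite_subset[OF R'_sub R_fin] .

lemma sgnp_add: "sgnp (x + y) = sgnp x * sgnp y"
  unfolding sgnp_def by auto

definition phi4 :: "((int \<times> int) \<times> int) \<times> int \<Rightarrow> int \<times> int \<times> int \<times> int" where
  "phi4 p = (case p of (((a,b),c),d) \<Rightarrow> (a,b,c+d,c-d))"
definition psi4 :: "int \<times> int \<times> int \<times> int \<Rightarrow> ((int \<times> int) \<times> int) \<times> int" where
  "psi4 q = (case q of (a,b,u,v) \<Rightarrow> (((a,b),(u+v) div 2),(u-v) div 2))"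

lemma gf_R': "gf d4 w4 $ n = (\<Sum>q\<in>R' n. wt q)"
  unfolding gf_nth
proof (rule sum.reindex_bij_witness[where i=psi4 and j=phi4])
  fix p assume p: "p \<in> {x. d4 x = n}"
  obtain a b c d where pq: "p = (((a,b),c),d)" by (metis prod.exhaust)
  show "psi4 (phi4 p) = p"
    unfolding pq phi4_def psi4_def by simp
  have dn: "nat (a^2) + nat (b^2) + 2 * nat (c^2) + 2 * nat (d^2) = n" using p unfolding pq d4_def by simp
  have "int (nat (a^2) + nat (b^2) + 2 * nat (c^2) + 2 * nat (d^2)) = a^2 + b^2 + 2*c^2 + 2*d^2" by simp
  hence "int n = a^2 + b^2 + 2*c^2 + 2*d^2" unfolding dn .
  moreover have "(c+d)^2 + (c-d)^2 = 2*c^2 + 2*d^2" by (simp add: power2_eq_square algebra_simps)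
  ultimately show "phi4 p \<in> R' n"
    unfolding pq R'_def phi4_def by auto
  show "wt (phi4 p) = w4 p"
    unfolding pq wt_def w4_def phi4_def by (simp add: sgnp_add mult.assoc)
next
  fix q assume q: "q \<in> R' n"
  obtain a b u v where qq: "q = (a,b,u,v)" by (metis prod.exhaust)
  have e: "a^2 + b^2 + u^2 + v^2 = int n" and p: "even u = even v" using q unfolding qq R'_def by auto
  have ev: "even (u+v)" "even (u-v)" using p by auto
  obtain c where c: "u + v = 2*c" using ev(1) unfolding dvd_def by blast
  obtain d where d: "u - v = 2*d" using ev(2) unfolding dvd_def by blast
  have uc: "u = c + d" "v = c - d" using c d by linarith+
  show "phi4 (psi4 q) = q"
    unfolding qq psi4_def phi4_def by (simp add: c d uc)
  have "(c+d)^2 + (c-d)^2 = 2*c^2 + 2*d^2" by (simp add: power2_eq_square algebra_simps)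
  hence "int n = a^2 + b^2 + 2*c^2 + 2*d^2" using e uc by simp
  hence "int (nat (a^2) + nat (b^2) + 2 * nat (c^2) + 2 * nat (d^2)) = int n" by simp
  hence "nat (a^2) + nat (b^2) + 2 * nat (c^2) + 2 * nat (d^2) = n" by (simp only: of_nat_eq_iff)
  thus "psi4 q \<in> {x. d4 x = n}"
    unfolding qq psi4_def d4_def by (simp add: c d)
qed

lemma par_all:
  fixes X Y Z W a b u v n :: int
  assumes "X mod 4 = (if even a then 0 else 1)" "Y mod 4 = (if even b then 0 else 1)"
    "Z mod 4 = (if even u then 0 else 1)" "W mod 4 = (if even v then 0 else 1)"
    "X + Y + Z + W = n" "even u = even v"
  shows "n mod 4 = 1 \<Longrightarrow> even u \<and> even v \<and> (even a \<noteq> even b)"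
    and "n mod 4 = 3 \<Longrightarrow> odd u \<and> odd v \<and> (even a \<noteq> even b)"
    and "n mod 4 = 2 \<Longrightarrow> (even u \<and> even v \<and> odd a \<and> odd b) \<or> (odd u \<and> odd v \<and> even a \<and> even b)"
    and "n mod 4 = 0 \<Longrightarrow> (even u \<and> even v \<and> even a \<and> even b) \<or> (odd u \<and> odd v \<and> odd a \<and> odd b)"
  using assms by presburger+

lemma par8:
  fixes X Y Z W n :: int
  assumes "X mod 8 = 1" "Y mod 8 = 1" "Z mod 8 = 1" "W mod 8 = 1" "X + Y + Z + W = n"
  shows "n mod 8 = 4"
  using assms by presburger

lemma R'_facts:
  assumes "(a,b,u,v) \<in> R' n"
  shows "(int n) mod 4 = 1 \<Longrightarrow> even u \<and> even v \<and> (even a \<noteq> even b)"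
    and "(int n) mod 4 = 3 \<Longrightarrow> odd u \<and> odd v \<and> (even a \<noteq> even b)"
    and "(int n) mod 4 = 2 \<Longrightarrow> (even u \<and> even v \<and> odd a \<and> odd b) \<or> (odd u \<and> odd v \<and> even a \<and> even b)"
    and "(int n) mod 4 = 0 \<Longrightarrow> (even u \<and> even v \<and> even a \<and> even b) \<or> (odd u \<and> odd v \<and> odd a \<and> odd b)"
proof -
  have e: "a^2 + b^2 + u^2 + v^2 = int n" "even u = even v" using assms unfolding R'_def by auto
  note p = par_all[OF sq_mod4[of a] sq_mod4[of b] sq_mod4[of u] sq_mod4[of v] e]
  show "(int n) mod 4 = 1 \<Longrightarrow> even u \<and> even v \<and> (even a \<noteq> even b)" by (rule p(1))
  show "(int n) mod 4 = 3 \<Longrightarrow> odd u \<and> odd v \<and> (even a \<noteq> even b)" by (rule p(2))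
  show "(int n) mod 4 = 2 \<Longrightarrow> (even u \<and> even v \<and> odd a \<and> odd b) \<or> (odd u \<and> odd v \<and> even a \<and> even b)" by (rule p(3))
  show "(int n) mod 4 = 0 \<Longrightarrow> (even u \<and> even v \<and> even a \<and> even b) \<or> (odd u \<and> odd v \<and> odd a \<and> odd b)" by (rule p(4))
qed

lemma R'_allodd:
  assumes "(a,b,u,v) \<in> R' n" "odd a" "odd b" "odd u" "odd v"
  shows "(int n) mod 8 = 4"
proof -
  have e: "a^2 + b^2 + u^2 + v^2 = int n" using assms unfolding R'_def by auto
  show ?thesis by (rule par8[OF sq_mod8 sq_mod8 sq_mod8 sq_mod8 e]) (use assms in auto)
qed

lemma R'_ne: "R' n \<noteq> {}"
proof -
  obtain a b c d where e: "int n = a^2 + b^2 + c^2 + d^2" using all_sq4[of n] unfolding sq4_def by blast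
  show ?thesis
  proof (cases "even c = even d")
    case True
    hence "(a,b,c,d) \<in> R' n" unfolding R'_def using e by simp
    thus ?thesis by blast
  next
    case False
    show ?thesis
    proof (cases "even a = even c")
      case True
      hence "(b,d,a,c) \<in> R' n" unfolding R'_def using e by (simp add: algebra_simps)
      thus ?thesis by blast
    next
      case False
      hence "even a = even d" using \<open>even c \<noteq> even d\<close> by blast
      hence "(b,c,a,d) \<in> R' n" unfolding R'_def using e by (simp add: algebra_simps)
      thus ?thesis by blast
    qed
  qed
qed

definition SS :: "nat \<Rightarrow> rat" where "SS n = (\<Sum>q\<in>R' n. wt q)"

lemma card_R'_pos: "card (R' n) > 0"
  using R'_ne R'_fin card_gt_0_iff by blast

lemma SS_1: assumes "n mod 4 = 1" shows "SS n < 0"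
proof -
  have n4: "(int n) mod 4 = 1" using assms by presburger
  have "SS n = (\<Sum>q\<in>R' n. -1)" unfolding SS_def
  proof (rule sum.cong)
    fix q assume q: "q \<in> R' n"
    obtain a b u v where qq: "q = (a,b,u,v)" by (metis prod.exhaust)
    have "even u \<and> even v \<and> (even a \<noteq> even b)" using R'_facts(1)[OF q[unfolded qq] n4] .
    thus "wt q = -1" unfolding qq wt_def sgnp_def by auto
  qed simp
  thus ?thesis using card_R'_pos[of n] by simp
qed

lemma SS_3: assumes "n mod 4 = 3" shows "SS n > 0"
proof -
  have n4: "(int n) mod 4 = 3" using assms by presburger
  have "SS n = (\<Sum>q\<in>R' n. 1)" unfolding SS_def
  proof (rule sum.cong)
    fix q assume q: "q \<in> R' n"
    obtain a b u v where qq: "q = (a,b,u,v)" by (metis prod.exhaust)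
    have "odd u \<and> odd v \<and> (even a \<noteq> even b)" using R'_facts(2)[OF q[unfolded qq] n4] .
    thus "wt q = 1" unfolding qq wt_def sgnp_def by auto
  qed simp
  thus ?thesis using card_R'_pos[of n] by simp
qed

definition swp :: "int \<times> int \<times> int \<times> int \<Rightarrow> int \<times> int \<times> int \<times> int" where
  "swp q = (case q of (a,b,u,v) \<Rightarrow> (u,v,a,b))"

lemma SS_2: assumes "n mod 4 = 2" shows "SS n = 0"
proof -
  have n4: "(int n) mod 4 = 2" using assms by presburger
  have inv: "\<And>q. swp (swp q) = q" unfolding swp_def by auto
  have mem: "swp q \<in> R' n" if q: "q \<in> R' n" for q
  proof -
    obtain a b u v where qq: "q = (a,b,u,v)" by (metis prod.exhaust)
    have pr: "(even u \<and> even v \<and> odd a \<and> odd b) \<or> (odd u \<and> odd v \<and> even a \<and> even b)"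
      using R'_facts(3)[OF q[unfolded qq] n4] .
    thus "swp q \<in> R' n" using q unfolding qq swp_def R'_def by (auto simp: algebra_simps)
  qed
  have "SS n = (\<Sum>q\<in>R' n. wt (swp q))" unfolding SS_def
    by (rule sum.reindex_bij_witness[where i=swp and j=swp]) (auto simp: inv mem)
  also have "\<dots> = (\<Sum>q\<in>R' n. - wt q)"
  proof (rule sum.cong)
    fix q assume q: "q \<in> R' n"
    obtain a b u v where qq: "q = (a,b,u,v)" by (metis prod.exhaust)
    have pr: "(even u \<and> even v \<and> odd a \<and> odd b) \<or> (odd u \<and> odd v \<and> even a \<and> even b)"
      using R'_facts(3)[OF q[unfolded qq] n4] .
    thus "wt (swp q) = - wt q" unfolding qq swp_def wt_def sgnp_def by auto
  qed simp
  also have "\<dots> = - SS n" unfolding SS_def by (simp add: sum_negf)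
  finally show ?thesis by simp
qed

definition alle :: "int \<times> int \<times> int \<times> int \<Rightarrow> bool" where
  "alle q = (case q of (a,b,u,v) \<Rightarrow> even a \<and> even b \<and> even u \<and> even v)"
definition allo :: "int \<times> int \<times> int \<times> int \<Rightarrow> bool" where
  "allo q = (case q of (a,b,u,v) \<Rightarrow> odd a \<and> odd b \<and> odd u \<and> odd v)"

lemma R'_0mod4: assumes "n mod 4 = 0" "q \<in> R' n" shows "alle q \<or> allo q"
proof -
  have n4: "(int n) mod 4 = 0" using assms by presburger
  obtain a b u v where qq: "q = (a,b,u,v)" by (metis prod.exhaust)
  show ?thesis using R'_facts(4)[OF assms(2)[unfolded qq] n4] unfolding qq alle_def allo_def by auto
qed

lemma SS_0: assumes "n mod 8 = 0" shows "SS n > 0"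
proof -
  have n4: "n mod 4 = 0" using assms by presburger
  have "SS n = (\<Sum>q\<in>R' n. 1)" unfolding SS_def
  proof (rule sum.cong)
    fix q assume q: "q \<in> R' n"
    obtain a b u v where qq: "q = (a,b,u,v)" by (metis prod.exhaust)
    have "\<not> allo q"
    proof
      assume "allo q"
      hence "(int n) mod 8 = 4" using R'_allodd[OF q[unfolded qq]] unfolding qq allo_def by auto
      thus False using assms by presburger
    qed
    hence "alle q" using R'_0mod4[OF n4 q] by blast
    thus "wt q = 1" unfolding qq alle_def wt_def sgnp_def by auto
  qed simp
  thus ?thesis using card_R'_pos[of n] by simp
qed

definition f1 :: "int \<times> int \<times> int \<times> int \<Rightarrow> int \<times> int \<times> int \<times> int" where
  "f1 q = (case q of (a,b,c,d) \<Rightarrow> (a+b+c+d, a+b-c-d, a-b+c-d, a-b-c+d))"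
definition f2 :: "int \<times> int \<times> int \<times> int \<Rightarrow> int \<times> int \<times> int \<times> int" where
  "f2 q = (case q of (a,b,c,d) \<Rightarrow> (-(a+b+c+d), a+b-c-d, a-b+c-d, a-b-c+d))"
definition dbl :: "int \<times> int \<times> int \<times> int \<Rightarrow> int \<times> int \<times> int \<times> int" where
  "dbl q = (case q of (a,b,c,d) \<Rightarrow> (2*a, 2*b, 2*c, 2*d))"

lemma hadamard_sq: "(a+b+c+d)^2 + (a+b-c-d)^2 + (a-b+c-d)^2 + (a-b-c+d)^2 = 4*((a::int)^2+b^2+c^2+d^2)"
  by (simp add: power2_eq_square algebra_simps)

lemma par_sum:
  fixes a b c d X Y Z W :: int
  assumes "even X = even a" "even Y = even b" "even Z = even c" "even W = even d" "odd (X+Y+Z+W)"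
  shows "odd (a+b+c+d) \<and> odd (a+b-c-d) \<and> odd (a-b+c-d) \<and> odd (a-b-c+d)"
  using assms by presburger

lemma f_props:
  assumes q: "q \<in> R j" and j: "odd j"
  shows "f1 q \<in> R' (4*j) \<and> allo (f1 q)" "f2 q \<in> R' (4*j) \<and> allo (f2 q)"
proof -
  obtain a b c d where qq: "q = (a,b,c,d)" by (metis prod.exhaust)
  have e: "a^2+b^2+c^2+d^2 = int j" using q unfolding qq R_def by simp
  have o: "odd (a^2+b^2+c^2+d^2)" using e j by simp
  have p: "odd (a+b+c+d) \<and> odd (a+b-c-d) \<and> odd (a-b+c-d) \<and> odd (a-b-c+d)"
    by (rule par_sum[OF _ _ _ _ o]) simp_all
  have s: "(a+b+c+d)^2 + (a+b-c-d)^2 + (a-b+c-d)^2 + (a-b-c+d)^2 = int (4*j)"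
    unfolding hadamard_sq e by simp
  have s': "(-(a+b+c+d))^2 + (a+b-c-d)^2 + (a-b+c-d)^2 + (a-b-c+d)^2 = int (4*j)"
    using s by (simp only: power2_minus)
  show "f1 q \<in> R' (4*j) \<and> allo (f1 q)" unfolding qq f1_def R'_def allo_def using s p by auto
  show "f2 q \<in> R' (4*j) \<and> allo (f2 q)" unfolding qq f2_def R'_def allo_def using s' p by auto
qed

lemma f1_inj: "inj f1"
proof (rule injI)
  fix q q' assume e: "f1 q = f1 q'"
  obtain a b c d where qq: "q = (a,b,c,d)" by (metis prod.exhaust)
  obtain a' b' c' d' where qq': "q' = (a',b',c',d')" by (metis prod.exhaust)
  have "a+b+c+d = a'+b'+c'+d'" "a+b-c-d = a'+b'-c'-d'" "a-b+c-d = a'-b'+c'-d'" "a-b-c+d = a'-b'-c'+d'"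
    using e unfolding qq qq' f1_def by auto
  hence "a = a'" "b = b'" "c = c'" "d = d'" by linarith+
  thus "q = q'" unfolding qq qq' by simp
qed

lemma f2_inj: "inj f2"
proof (rule injI)
  fix q q' assume e: "f2 q = f2 q'"
  obtain a b c d where qq: "q = (a,b,c,d)" by (metis prod.exhaust)
  obtain a' b' c' d' where qq': "q' = (a',b',c',d')" by (metis prod.exhaust)
  have "a+b+c+d = a'+b'+c'+d'" "a+b-c-d = a'+b'-c'-d'" "a-b+c-d = a'-b'+c'-d'" "a-b-c+d = a'-b'-c'+d'"
    using e unfolding qq qq' f2_def by auto
  hence "a = a'" "b = b'" "c = c'" "d = d'" by linarith+
  thus "q = q'" unfolding qq qq' by simp
qed

lemma f12_disj: assumes "q \<in> R j" "q' \<in> R j" "odd j" shows "f1 q \<noteq> f2 q'"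
proof
  assume e: "f1 q = f2 q'"
  obtain a b c d where qq: "q = (a,b,c,d)" by (metis prod.exhaust)
  obtain a' b' c' d' where qq': "q' = (a',b',c',d')" by (metis prod.exhaust)
  have "a+b+c+d = -(a'+b'+c'+d')" "a+b-c-d = a'+b'-c'-d'" "a-b+c-d = a'-b'+c'-d'" "a-b-c+d = a'-b'-c'+d'"
    using e unfolding qq qq' f1_def f2_def by auto
  hence s2: "a+b+c+d = 2*(a - a')" by algebra
  have "even (a+b+c+d)" unfolding s2 by simp
  moreover have "odd (a+b+c+d)" using f_props(1)[OF assms(1,3)] unfolding qq f1_def allo_def by simp
  ultimately show False by simp
qed

lemma SS_4: assumes "n mod 8 = 4" shows "SS n < 0"
proof -
  define j where "j = n div 4"
  have nj: "n = 4*j" unfolding j_def using assms by presburger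
  have jo: "odd j" unfolding j_def using assms by presburger
  have n4: "n mod 4 = 0" using assms by presburger
  define E where "E = {q\<in>R' n. alle q}"
  define Od where "Od = {q\<in>R' n. allo q}"
  have EO: "R' n = E \<union> Od" unfolding E_def Od_def using R'_0mod4[OF n4] by auto
  have disj: "E \<inter> Od = {}" unfolding E_def Od_def alle_def allo_def by auto
  have fE: "finite E" "finite Od" unfolding E_def Od_def using R'_fin by auto
  have "SS n = (\<Sum>q\<in>E. wt q) + (\<Sum>q\<in>Od. wt q)" unfolding SS_def EO
    by (rule sum.union_disjoint[OF fE disj])
  also have "(\<Sum>q\<in>E. wt q) = (\<Sum>q\<in>E. 1)"
    by (rule sum.cong) (auto simp: E_def alle_def wt_def sgnp_def)
  also have "(\<Sum>q\<in>Od. wt q) = (\<Sum>q\<in>Od. -1)"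
    by (rule sum.cong) (auto simp: Od_def allo_def wt_def sgnp_def)
  finally have SSe: "SS n = of_nat (card E) - of_nat (card Od)" by simp
  have "E \<subseteq> dbl ` R j"
  proof
    fix q assume q: "q \<in> E"
    obtain a b u v where qq: "q = (a,b,u,v)" by (metis prod.exhaust)
    have ev: "even a" "even b" "even u" "even v" using q unfolding E_def qq alle_def by auto
    obtain a' where a': "a = 2*a'" using ev(1) by blast
    obtain b' where b': "b = 2*b'" using ev(2) by blast
    obtain u' where u': "u = 2*u'" using ev(3) by blast
    obtain v' where v': "v = 2*v'" using ev(4) by blast
    have "a^2+b^2+u^2+v^2 = int n" using q unfolding E_def R'_def qq by auto
    hence "4*(a'^2+b'^2+u'^2+v'^2) = 4 * int j" unfolding a' b' u' v' nj by (simp add: power2_eq_square algebra_simps)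
    hence "(a',b',u',v') \<in> R j" unfolding R_def by simp
    moreover have "q = dbl (a',b',u',v')" unfolding qq dbl_def a' b' u' v' by simp
    ultimately show "q \<in> dbl ` R j" by blast
  qed
  hence cE: "card E \<le> card (R j)"
    by (meson R_fin card_image_le card_mono finite_imageI le_trans)
  have sub: "f1 ` R j \<union> f2 ` R j \<subseteq> Od"
    unfolding Od_def using f_props[OF _ jo] nj by auto
  have d12: "f1 ` R j \<inter> f2 ` R j = {}" using f12_disj[OF _ _ jo] by blast
  have "card (f1 ` R j \<union> f2 ` R j) = card (f1 ` R j) + card (f2 ` R j)"
    by (rule card_Un_disjoint) (use R_fin d12 in auto)
  also have "\<dots> = 2 * card (R j)"
    using card_image[OF inj_on_subset[OF f1_inj]] card_image[OF inj_on_subset[OF f2_inj]] by simp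
  finally have "2 * card (R j) \<le> card Od" using card_mono[OF fE(2) sub] by simp
  moreover have "card (R j) > 0" using card_R'_pos[of j] card_mono[OF R_fin R'_sub[of j]] by linarith
  ultimately have "card E < card Od" using cE by linarith
  thus ?thesis unfolding SSe by simp
qed

definition g8 :: "nat \<Rightarrow> rat" where
  "g8 i = (if i mod 8 \<in> {0,3,7} then 1 else if i mod 8 \<in> {1,4,5} then -1 else 0)"
definition s8 :: "nat \<Rightarrow> rat" where
  "s8 n = (if n mod 8 \<in> {0,3,6,7} then 1 else -1)"

lemma C1_SS: "C1 n = SS n" unfolding C1_gf gf_R' SS_def ..

lemma C1_pos: "i mod 8 \<in> {0,3,7} \<Longrightarrow> C1 i > 0"
proof -
  assume a: "i mod 8 \<in> {0,3,7}"
  show ?thesis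
  proof (cases "i mod 8 = 0")
    case True thus ?thesis using SS_0 C1_SS by simp
  next
    case False
    hence "i mod 8 = 3 \<or> i mod 8 = 7" using a by simp
    hence "i mod 4 = 3" by presburger
    thus ?thesis using SS_3 C1_SS by simp
  qed
qed

lemma C1_neg: "i mod 8 \<in> {1,4,5} \<Longrightarrow> C1 i < 0"
proof -
  assume a: "i mod 8 \<in> {1,4,5}"
  show ?thesis
  proof (cases "i mod 8 = 4")
    case True thus ?thesis using SS_4 C1_SS by simp
  next
    case False
    hence "i mod 8 = 1 \<or> i mod 8 = 5" using a by simp
    hence "i mod 4 = 1" by presburger
    thus ?thesis using SS_1 C1_SS by simp
  qed
qed

lemma C1_zero: "i mod 4 = 2 \<Longrightarrow> C1 i = 0"
  using SS_2 C1_SS by simp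

lemma C1_g8: assumes "g8 i \<noteq> 0" shows "g8 i * C1 i > 0"
proof (cases "i mod 8 \<in> {0,3,7}")
  case True
  hence "g8 i = 1" unfolding g8_def by simp
  thus ?thesis using C1_pos[OF True] by simp
next
  case False
  hence b: "i mod 8 \<in> {1,4,5}" using assms unfolding g8_def by (auto split: if_splits)
  hence "g8 i = -1" using False unfolding g8_def by simp
  thus ?thesis using C1_neg[OF b] by simp
qed

lemma C1_g80: "g8 i = 0 \<Longrightarrow> C1 i = 0"
proof -
  assume "g8 i = 0"
  hence "i mod 8 \<notin> {0,3,7,1,4,5}" unfolding g8_def by (auto split: if_splits)
  hence "i mod 8 \<noteq> 0" "i mod 8 \<noteq> 1" "i mod 8 \<noteq> 3" "i mod 8 \<noteq> 4" "i mod 8 \<noteq> 5" "i mod 8 \<noteq> 7" by simp_all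
  hence "i mod 4 = 2" by presburger
  thus ?thesis by (rule C1_zero)
qed

lemma lt8: assumes "(x::nat) < 8" shows "x = 0 \<or> x = 1 \<or> x = 2 \<or> x = 3 \<or> x = 4 \<or> x = 5 \<or> x = 6 \<or> x = 7"
proof -
  have "x \<in> {..<8}" using assms by simp
  also have "{..<8::nat} = {0,1,2,3,4,5,6,7}" by (simp add: lessThan_nat_numeral lessThan_Suc insert_commute)
  finally show ?thesis by simp
qed
lemma modh1: "8*(w::nat) \<le> n \<Longrightarrow> (n - 8*w) mod 8 = n mod 8"
proof -
  assume "8*w \<le> n"
  then obtain m where "n = 8*w + m" using le_Suc_ex by blast
  thus ?thesis by simp
qed
lemma modh2: "16*(w::nat) + 2 \<le> n \<Longrightarrow> (n - (16*w+2)) mod 8 = (n mod 8 + 6) mod 8"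
proof -
  assume "16*w + 2 \<le> n"
  then obtain m where m: "n = 16*w + 2 + m" using le_Suc_ex by blast
  have l: "n - (16*w+2) = m" unfolding m by simp
  have "(n mod 8 + 6) mod 8 = (n + 6) mod 8" by (simp add: mod_add_left_eq)
  also have "n + 6 = m + (2*w+1)*8" unfolding m by simp
  also have "(m + (2*w+1)*8) mod 8 = m mod 8" by (rule mod_mult_self1)
  finally show ?thesis unfolding l by simp
qed
lemma mod8_cases: "(n::nat) mod 8 = 0 \<or> n mod 8 = 1 \<or> n mod 8 = 2 \<or> n mod 8 = 3 \<or> n mod 8 = 4 \<or> n mod 8 = 5 \<or> n mod 8 = 6 \<or> n mod 8 = 7"
  by (rule lt8) simp
lemma key_arith:
  fixes t :: int assumes "nat (2*t^2) \<le> n"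
  shows "g8 (n - nat (2*t^2)) = 0 \<or> g8 (n - nat (2*t^2)) * sgnp t = s8 n"
proof (cases "even t")
  case True
  then obtain r where r: "t = 2*r" by blast
  have "2*t^2 = 8*r^2" unfolding r by (simp add: power2_eq_square)
  hence e: "nat (2*t^2) = 8 * nat (r^2)" by (simp add: nat_mult_distrib)
  have m: "(n - nat (2*t^2)) mod 8 = n mod 8" using assms unfolding e by (rule modh1)
  show ?thesis unfolding g8_def s8_def sgnp_def m using True by auto
next
  case False
  then obtain r where r: "t = 2*r+1" using oddE by blast
  have ev: "even (r*r + r)" by simp
  then obtain z where z: "r*r + r = 2*z" by blast
  have "0 \<le> r*(r+1)"
  proof (cases "r \<ge> 0")
    case True thus ?thesis by simp
  next
    case False hence "r \<le> 0" "r + 1 \<le> 0" by linarith+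
    thus ?thesis by (simp add: mult_nonpos_nonpos)
  qed
  hence z0: "z \<ge> 0" using z by (simp add: algebra_simps)
  have "2*t^2 = 16*z + 2" unfolding r using z by (simp add: power2_eq_square algebra_simps)
  hence e: "nat (2*t^2) = 16 * nat z + 2" using z0 by (simp add: nat_mult_distrib nat_add_distrib)
  have m: "(n - nat (2*t^2)) mod 8 = (n mod 8 + 6) mod 8" using assms unfolding e by (rule modh2)
  note c = mod8_cases[of n]
  from m show ?thesis unfolding g8_def s8_def sgnp_def using False c
    by (elim disjE) simp_all
qed


definition F2 :: "nat \<Rightarrow> int set" where "F2 m = {t::int. 2 * nat (t^2) = m}"

lemma F2_fin: "finite (F2 m)" unfolding F2_def by (rule th_fin) simp

lemma th2_nth: "th 2 $ m = (\<Sum>t\<in>F2 m. sgnp t)" unfolding th_nth F2_def ..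

lemma sgnp_minus: "sgnp (-t) = sgnp t" unfolding sgnp_def by simp

lemma sgnp_sq: "sgnp t * sgnp t = 1" unfolding sgnp_def by simp

lemma th2_form: assumes t: "t \<in> F2 m" shows "th 2 $ m = of_nat (card (F2 m)) * sgnp t"
proof -
  have "th 2 $ m = (\<Sum>t'\<in>F2 m. sgnp t)" unfolding th2_nth
  proof (rule sum.cong)
    fix t' assume t': "t' \<in> F2 m"
    have "2 * nat (t'^2) = 2 * nat (t^2)" using t t' unfolding F2_def by simp
    hence "nat (t'^2) = nat (t^2)" by simp
    hence "int (nat (t'^2)) = int (nat (t^2))" by (simp only:)
    hence "t'^2 = t^2" by simp
    hence "t' = t \<or> t' = -t" using power2_eq_iff by blast
    thus "sgnp t' = sgnp t" using sgnp_minus by auto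
  qed simp
  thus ?thesis by simp
qed

lemma C2_sum: "C2 n = (\<Sum>i=0..n. C1 i * th 2 $ (n - i))"
  unfolding C2_gf fps_mult_nth C1_gf ..

lemma term_nonneg: assumes i: "i \<le> n"
  shows "s8 n * (C1 i * th 2 $ (n - i)) \<ge> 0"
    and "F2 (n - i) \<noteq> {} \<Longrightarrow> g8 i \<noteq> 0 \<Longrightarrow> s8 n * (C1 i * th 2 $ (n - i)) > 0"
proof -
  have main: "s8 n * (C1 i * th 2 $ (n - i)) = of_nat (card (F2 (n-i))) * (g8 i * C1 i)"
    if t: "t \<in> F2 (n - i)" and g: "g8 i \<noteq> 0" for t
  proof -
    have "2 * nat (t^2) = n - i" using t unfolding F2_def by simp
    hence e: "nat (2*t^2) = n - i" by (simp add: nat_mult_distrib)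
    hence le: "nat (2*t^2) \<le> n" by simp
    have ii: "i = n - nat (2*t^2)" using e i by simp
    have "g8 i * sgnp t = s8 n" using key_arith[OF le] g unfolding ii[symmetric] by blast
    hence "s8 n * (C1 i * th 2 $ (n - i)) = (g8 i * sgnp t) * (C1 i * (of_nat (card (F2 (n-i))) * sgnp t))"
      using th2_form[OF t] by simp
    also have "\<dots> = of_nat (card (F2 (n-i))) * (g8 i * C1 i) * (sgnp t * sgnp t)" by (simp only: ac_simps)
    finally show ?thesis unfolding sgnp_sq by simp
  qed
  show "s8 n * (C1 i * th 2 $ (n - i)) \<ge> 0"
  proof (cases "F2 (n - i) = {}")
    case True thus ?thesis unfolding th2_nth by simp
  next
    case False
    then obtain t where t: "t \<in> F2 (n - i)" by blast
    show ?thesis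
    proof (cases "g8 i = 0")
      case True thus ?thesis using C1_g80 by simp
    next
      case False
      thus ?thesis unfolding main[OF t False] using C1_g8[OF False] by simp
    qed
  qed
  show "F2 (n - i) \<noteq> {} \<Longrightarrow> g8 i \<noteq> 0 \<Longrightarrow> s8 n * (C1 i * th 2 $ (n - i)) > 0"
  proof -
    assume ne: "F2 (n - i) \<noteq> {}" and g: "g8 i \<noteq> 0"
    then obtain t where t: "t \<in> F2 (n - i)" by blast
    have "card (F2 (n-i)) > 0" using ne F2_fin card_gt_0_iff by blast
    thus ?thesis unfolding main[OF t g] using C1_g8[OF g] by simp
  qed
qed

lemma C2_pos: "s8 n * C2 n > 0"
proof -
  obtain i0 where i0: "i0 \<le> n" "F2 (n - i0) \<noteq> {}" "g8 i0 \<noteq> 0"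
  proof (cases "n mod 4 = 2")
    case False
    have "0 \<in> F2 0" unfolding F2_def by simp
    moreover have "g8 n \<noteq> 0"
    proof
      assume "g8 n = 0"
      hence "n mod 8 \<notin> {0,3,7,1,4,5}" unfolding g8_def by (auto split: if_splits)
      hence "n mod 8 = 2 \<or> n mod 8 = 6" using mod8_cases[of n] by auto
      hence "n mod 8 mod 4 = 2" by auto
      thus False using False by (simp add: mod_mod_cancel)
    qed
    ultimately show ?thesis using that[of n] by auto
  next
    case True
    have "n mod 4 \<le> n" by (rule mod_less_eq_dividend)
    hence n2: "n \<ge> 2" using True by simp
    have "1 \<in> F2 2" unfolding F2_def by simp
    hence "F2 (n - (n - 2)) \<noteq> {}" using n2 by auto
    moreover have "g8 (n - 2) \<noteq> 0"
    proof -
      have "(n - 2) mod 4 = 0" using True n2 by presburger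
      hence "(n - 2) mod 8 mod 4 = 0" by (simp add: mod_mod_cancel)
      hence "(n - 2) mod 8 = 0 \<or> (n - 2) mod 8 = 4" using mod8_cases[of "n-2"] by auto
      thus ?thesis unfolding g8_def by auto
    qed
    ultimately show ?thesis using that[of "n-2"] by auto
  qed
  have "s8 n * C2 n = (\<Sum>i=0..n. s8 n * (C1 i * th 2 $ (n - i)))"
    unfolding C2_sum sum_distrib_left ..
  also have "\<dots> > 0"
    by (rule sum_pos2[where i=i0]) (use i0 term_nonneg in auto)
  finally show ?thesis .
qed

lemma sgn_C1: "sgn (C1 n) = g8 n"
proof (cases "g8 n = 0")
  case True thus ?thesis using C1_g80 by simp
next
  case False
  have "g8 n = 1 \<or> g8 n = -1" using False unfolding g8_def by (auto split: if_splits)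
  thus ?thesis using C1_g8[OF False] by (auto simp: sgn_if)
qed

lemma sgn_C2: "sgn (C2 n) = s8 n"
proof -
  have "s8 n = 1 \<or> s8 n = -1" unfolding s8_def by auto
  thus ?thesis using C2_pos[of n] by (auto simp: sgn_if)
qed

lemma mod4_2: "(n::nat) mod 4 = 2 \<Longrightarrow> n mod 8 = 2 \<or> n mod 8 = 6"
proof -
  assume a: "n mod 4 = 2"
  have "n mod 8 mod 4 = 2" using a by (simp add: mod_mod_cancel)
  thus ?thesis using mod8_cases[of n] by auto
qed

theorem theorem1p4:
  shows "(\<forall>n\<ge>1. sgn (C1 (n + 8)) = sgn (C1 n)) \<and>
         (\<forall>n\<ge>1. (n mod 8 \<in> {0, 3, 7} \<longrightarrow> sgn (C1 n) = 1) \<and>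
                  (n mod 8 \<in> {1, 4, 5} \<longrightarrow> sgn (C1 n) = -1) \<and>
                  (n mod 4 = 2 \<longrightarrow> sgn (C1 n) = 0)) \<and>
         (\<forall>n\<ge>1. sgn (C2 (n + 8)) = sgn (C2 n)) \<and>
         (\<forall>n\<ge>1. (n mod 8 \<in> {0, 3, 6, 7} \<longrightarrow> sgn (C2 n) = 1) \<and>
                  (n mod 8 \<in> {1, 2, 4, 5} \<longrightarrow> sgn (C2 n) = -1))"
proof (intro conjI allI impI)
  fix n :: nat
  show "sgn (C1 (n + 8)) = sgn (C1 n)" unfolding sgn_C1 g8_def by simp
  show "sgn (C2 (n + 8)) = sgn (C2 n)" unfolding sgn_C2 s8_def by simp
  show "n mod 8 \<in> {0, 3, 7} \<Longrightarrow> sgn (C1 n) = 1" unfolding sgn_C1 g8_def by simp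
  show "n mod 8 \<in> {1, 4, 5} \<Longrightarrow> sgn (C1 n) = -1" unfolding sgn_C1 g8_def by auto
  show "n mod 4 = 2 \<Longrightarrow> sgn (C1 n) = 0" unfolding sgn_C1 g8_def using mod4_2[of n] by auto
  show "n mod 8 \<in> {0, 3, 6, 7} \<Longrightarrow> sgn (C2 n) = 1" unfolding sgn_C2 s8_def by simp
  show "n mod 8 \<in> {1, 2, 4, 5} \<Longrightarrow> sgn (C2 n) = -1" unfolding sgn_C2 s8_def by auto
qed


end
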